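(* Let $V_3$ be the subgroup of $P\Sigma_3$ generated by $\nu_{31},\nu_{32},\nu_{33}$, and $OP\Sigma_3=P\Sigma_3/V_3$. Then $V_3$ is a free group of rank $3$, $OP\Sigma_3$ is a free group of rank $3$ (generated by the images of $\xi_{1,2},\xi_{2,1},\xi_{1,3}$), and $P\Sigma_3=V_3\rtimes OP\Sigma_3$ is an almost-direct product, i.e. a semidirect product in which $OP\Sigma_3$ acts trivially on $V_3^{ab}$.
   Context: $F_3$ is the free group on $x_1,x_2,x_3$. For $i\neq j$, $\xi_{i,j}\in\mathrm{Aut}(F_3)$ is given by $\xi_{i,j}(x_i)=x_j^{-1}x_ix_j$ and $\xi_{i,j}(x_l)=x_l$ for $l\neq i$; $P\Sigma_3$ is the subgroup generated by all $\xi_{i,j}$. For $1\leq i\leq 3$, $\nu_{3i}$ is the inner automorphism $x_k\mapsto x_i^{-1}x_kx_i$ of $F_3$ (so $V_3=\mathrm{Inn}(F_3)$, which is normal in $P\Sigma_3$). *)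

theory Defs
  imports "HOL-Algebra.Algebra"
begin

text \<open>A letter (b, a) stands for x_a if b = False and for x_a inverse if b = True.\<close>

type_synonym letter = "bool \<times> nat"

definition inv_pair :: "letter \<Rightarrow> letter \<Rightarrow> bool" where
  "inv_pair l m \<longleftrightarrow> snd l = snd m \<and> fst l \<noteq> fst m"

fun red :: "letter list \<Rightarrow> letter list" where
  "red [] = []"
| "red (l # ls) = (case red ls of [] \<Rightarrow> [l]
                     | m # ms \<Rightarrow> (if inv_pair l m then ms else l # m # ms))"

definition reduced :: "letter list \<Rightarrow> bool" where
  "reduced w \<longleftrightarrow> (\<forall>i. Suc i < length w \<longrightarrow> \<not> inv_pair (w ! i) (w ! Suc i))"

definition FreeGroup :: "nat \<Rightarrow> letter list monoid" where
  "FreeGroup n = \<lparr>carrier = {w. reduced w \<and> (\<forall>l\<in>set w. snd l \<in> {1..n})},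
                  monoid.mult = (\<lambda>u v. red (u @ v)),
                  one = []\<rparr>"

definition gen :: "nat \<Rightarrow> letter list" where
  "gen a = [(False, a)]"

definition winv :: "letter list \<Rightarrow> letter list" where
  "winv w = rev (map (\<lambda>(b, a). (\<not> b, a)) w)"

definition subst :: "(nat \<Rightarrow> letter list) \<Rightarrow> letter list \<Rightarrow> letter list" where
  "subst f w = red (concat (map (\<lambda>(b, a). if b then winv (f a) else f a) w))"

abbreviation F3 :: "letter list monoid" where
  "F3 \<equiv> FreeGroup 3"

definition xi :: "nat \<Rightarrow> nat \<Rightarrow> letter list \<Rightarrow> letter list" where
  "xi i j = restrict
     (subst (\<lambda>l. if l = i then [(True, j), (False, i), (False, j)] else [(False, l)]))
     (carrier F3)"

definition nu :: "nat \<Rightarrow> letter list \<Rightarrow> letter list" where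
  "nu i = restrict (\<lambda>w. red (winv (gen i) @ w @ gen i)) (carrier F3)"

abbreviation AutF3 :: "(letter list \<Rightarrow> letter list) monoid" where
  "AutF3 \<equiv> AutoGroup F3"

definition PSigma3 :: "(letter list \<Rightarrow> letter list) monoid" where
  "PSigma3 = subgroup_generated AutF3
     {xi i j | i j. i \<in> {1..3} \<and> j \<in> {1..3} \<and> i \<noteq> j}"

definition V3 :: "(letter list \<Rightarrow> letter list) set" where
  "V3 = generate PSigma3 {nu 1, nu 2, nu 3}"

definition V3grp :: "(letter list \<Rightarrow> letter list) monoid" where
  "V3grp = subgroup_generated PSigma3 {nu 1, nu 2, nu 3}"

definition OPSigma3 :: "(letter list \<Rightarrow> letter list) set monoid" where
  "OPSigma3 = PSigma3 Mod V3"

end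

theory Submission
  imports Defs
begin


definition linv :: "letter \<Rightarrow> letter" where "linv l = (\<not> fst l, snd l)"

lemma inv_pair_iff: "inv_pair l m \<longleftrightarrow> m = linv l"
  by (cases l; cases m) (auto simp: inv_pair_def linv_def)

lemma inv_pair_sym: "inv_pair l m \<longleftrightarrow> inv_pair m l"
  by (auto simp: inv_pair_def)

lemma linv_linv[simp]: "linv (linv l) = l" by (simp add: linv_def)
lemma snd_linv[simp]: "snd (linv l) = snd l" by (simp add: linv_def)
lemma fst_linv[simp]: "fst (linv l) = (\<not> fst l)" by (simp add: linv_def)
lemma linv_neq[simp]: "linv l \<noteq> l" "l \<noteq> linv l" by (auto simp: linv_def prod_eq_iff)
lemma linv_inj[simp]: "linv l = linv m \<longleftrightarrow> l = m" by (auto simp: linv_def prod_eq_iff)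

declare red.simps(2)[simp del]

definition red1 :: "letter \<Rightarrow> letter list \<Rightarrow> letter list" where
  "red1 l s = (case s of [] \<Rightarrow> [l] | m # ms \<Rightarrow> (if inv_pair l m then ms else l # m # ms))"

lemma red_Cons[simp]: "red (l # ls) = red1 l (red ls)" by (simp add: red1_def red.simps(2))

lemma reduced_Nil[simp]: "reduced []" by (simp add: reduced_def)
lemma reduced_single[simp]: "reduced [l]" by (simp add: reduced_def)
lemma reduced_Cons2[simp]: "reduced (l # m # ms) \<longleftrightarrow> \<not> inv_pair l m \<and> reduced (m # ms)"
proof
  assume h: "reduced (l # m # ms)"
  have "\<not> inv_pair l m" using h[unfolded reduced_def, rule_format, of 0] by simp
  moreover have "reduced (m # ms)" unfolding reduced_def
  proof (intro allI impI)
    fix i assume "Suc i < length (m # ms)"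
    then show "\<not> inv_pair ((m # ms) ! i) ((m # ms) ! Suc i)"
      using h[unfolded reduced_def, rule_format, of "Suc i"] by simp
  qed
  ultimately show "\<not> inv_pair l m \<and> reduced (m # ms)" by simp
next
  assume h: "\<not> inv_pair l m \<and> reduced (m # ms)"
  show "reduced (l # m # ms)" unfolding reduced_def
  proof (intro allI impI)
    fix i assume i: "Suc i < length (l # m # ms)"
    show "\<not> inv_pair ((l # m # ms) ! i) ((l # m # ms) ! Suc i)"
    proof (cases i)
      case 0 then show ?thesis using h by simp
    next
      case (Suc k) then show ?thesis using h i unfolding reduced_def by simp
    qed
  qed
qed

lemma reduced_Cons: "reduced (l # ms) \<longleftrightarrow> reduced ms \<and> (ms = [] \<or> \<not> inv_pair l (hd ms))"
  by (cases ms) auto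

lemma reduced_append: "reduced (u @ v) \<longleftrightarrow> reduced u \<and> reduced v \<and> (u = [] \<or> v = [] \<or> \<not> inv_pair (last u) (hd v))"
proof (induction u)
  case Nil then show ?case by simp
next
  case (Cons x u)
  show ?case
  proof (cases u)
    case Nil then show ?thesis by (cases v) auto
  next
    case (Cons y w)
    then show ?thesis using Cons.IH by (auto simp: reduced_Cons)
  qed
qed

lemma reduced_tl: "reduced w \<Longrightarrow> reduced (tl w)"
  by (cases w) (auto simp: reduced_Cons)

lemma reduced_red1: "reduced s \<Longrightarrow> reduced (red1 l s)"
  by (cases s) (auto simp: red1_def reduced_Cons)

lemma reduced_red: "reduced (red w)"
  by (induction w) (auto simp: red_Cons reduced_red1)

lemma red_reduced: "reduced w \<Longrightarrow> red w = w"
proof (induction w)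
  case Nil then show ?case by simp
next
  case (Cons l ls)
  then have "red ls = ls" by (simp add: reduced_Cons)
  then show ?case using Cons.prems by (cases ls) (auto simp: red_Cons red1_def)
qed

lemma red_red[simp]: "red (red w) = red w"
  by (simp add: red_reduced reduced_red)

lemma red1_cancel: "reduced s \<Longrightarrow> red1 l (red1 (linv l) s) = s"
  by (cases s) (auto simp: red1_def inv_pair_iff reduced_Cons split: list.splits)

lemma red_red1_append: "reduced r \<Longrightarrow> red (red1 x r @ v) = red1 x (red (r @ v))"
proof (cases r)
  case Nil then show ?thesis by (simp add: red1_def red_Cons)
next
  case (Cons m ms)
  assume r: "reduced r"
  show ?thesis
  proof (cases "inv_pair x m")
    case True
    then have m: "m = linv x" by (simp add: inv_pair_iff)
    have "red1 x (red (r @ v)) = red1 x (red1 (linv x) (red (ms @ v)))"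
      using Cons m by (simp add: red_Cons)
    also have "\<dots> = red (ms @ v)" by (simp add: red1_cancel reduced_red)
    finally show ?thesis using Cons True by (simp add: red1_def)
  next
    case False
    then show ?thesis using Cons by (simp add: red1_def red_Cons)
  qed
qed

lemma red_append_left[simp]: "red (red u @ v) = red (u @ v)"
proof (induction u)
  case Nil then show ?case by simp
next
  case (Cons x u)
  have "red (red (x # u) @ v) = red (red1 x (red u) @ v)" by (simp add: red_Cons)
  also have "\<dots> = red1 x (red (red u @ v))" by (simp add: red_red1_append reduced_red)
  also have "\<dots> = red (x # u @ v)" using Cons.IH by (simp add: red_Cons)
  finally show ?case by simp
qed

lemma red_append_right[simp]: "red (u @ red v) = red (u @ v)"
  by (induction u) (auto simp: red_Cons)

lemma red_append_mid: "red (a @ red b @ c) = red (a @ b @ c)"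
proof -
  have "red (a @ red b @ c) = red (a @ red (red b @ c))" by (metis red_append_right)
  also have "\<dots> = red (a @ red (b @ c))" by simp
  finally show ?thesis by simp
qed

lemma set_red1: "set (red1 l s) \<subseteq> insert l (set s)"
  by (cases s) (auto simp: red1_def)

lemma set_red: "set (red w) \<subseteq> set w"
proof (induction w)
  case Nil then show ?case by simp
next
  case (Cons l w) then show ?case using set_red1[of l "red w"] by (auto simp: red_Cons)
qed

lemma winv_alt: "winv w = rev (map linv w)"
  by (simp add: winv_def linv_def case_prod_beta')

lemma winv_Nil[simp]: "winv [] = []" by (simp add: winv_alt)
lemma winv_Cons[simp]: "winv (l # w) = winv w @ [linv l]" by (simp add: winv_alt)
lemma winv_append[simp]: "winv (u @ v) = winv v @ winv u" by (simp add: winv_alt)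
lemma winv_winv[simp]: "winv (winv w) = w" by (simp add: winv_alt rev_map comp_def)
lemma set_winv: "set (winv w) = linv ` set w" by (simp add: winv_alt)
lemma winv_eq_Nil[simp]: "winv w = [] \<longleftrightarrow> w = []" by (simp add: winv_alt)
lemma length_winv[simp]: "length (winv w) = length w" by (simp add: winv_alt)

lemma reduced_winv: "reduced w \<Longrightarrow> reduced (winv w)"
proof (induction w)
  case Nil then show ?case by simp
next
  case (Cons l w)
  then have rw: "reduced w" and h: "w = [] \<or> \<not> inv_pair l (hd w)" by (auto simp: reduced_Cons)
  have lw: "w \<noteq> [] \<Longrightarrow> last (winv w) = linv (hd w)"
    by (cases w) (auto simp: winv_alt)
  have "w \<noteq> [] \<Longrightarrow> \<not> inv_pair (last (winv w)) (linv l)"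
    using h lw by (auto simp: inv_pair_iff)
  then show ?case using Cons.IH[OF rw] 
    by (auto simp: reduced_append)
qed

lemma red_winv_right[simp]: "red (w @ winv w) = []"
proof (induction w)
  case Nil then show ?case by simp
next
  case (Cons x w)
  have "red (x # w @ winv w @ [linv x]) = red1 x (red ((w @ winv w) @ [linv x]))"
    by (simp add: red_Cons)
  also have "red ((w @ winv w) @ [linv x]) = red (red (w @ winv w) @ [linv x])"
    by (metis red_append_left)
  also have "\<dots> = [linv x]" using Cons.IH by (simp add: red_Cons red1_def)
  finally show ?case by (simp add: red1_def inv_pair_iff)
qed

lemma red_winv_left[simp]: "red (winv w @ w) = []"
  using red_winv_right[of "winv w"] by simp

lemma carrier_FG: "carrier (FreeGroup n) = {w. reduced w \<and> (\<forall>l\<in>set w. snd l \<in> {1..n})}"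
  by (simp add: FreeGroup_def)
lemma mult_FG: "u \<otimes>\<^bsub>FreeGroup n\<^esub> v = red (u @ v)"
  by (simp add: FreeGroup_def)
lemma one_FG[simp]: "\<one>\<^bsub>FreeGroup n\<^esub> = []"
  by (simp add: FreeGroup_def)

lemma group_FG: "group (FreeGroup n)"
proof (rule groupI)
  fix x y assume "x \<in> carrier (FreeGroup n)" "y \<in> carrier (FreeGroup n)"
  then show "x \<otimes>\<^bsub>FreeGroup n\<^esub> y \<in> carrier (FreeGroup n)"
    using set_red[of "x @ y"] by (auto simp: carrier_FG reduced_red mult_FG)
next
  show "\<one>\<^bsub>FreeGroup n\<^esub> \<in> carrier (FreeGroup n)" by (simp add: carrier_FG)
next
  fix x y z
  show "x \<otimes>\<^bsub>FreeGroup n\<^esub> y \<otimes>\<^bsub>FreeGroup n\<^esub> z = x \<otimes>\<^bsub>FreeGroup n\<^esub> (y \<otimes>\<^bsub>FreeGroup n\<^esub> z)"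
    by (simp add: mult_FG)
next
  fix x assume "x \<in> carrier (FreeGroup n)"
  then show "\<one>\<^bsub>FreeGroup n\<^esub> \<otimes>\<^bsub>FreeGroup n\<^esub> x = x" by (simp add: carrier_FG red_reduced mult_FG)
next
  fix x assume x: "x \<in> carrier (FreeGroup n)"
  then have "winv x \<in> carrier (FreeGroup n)"
    by (auto simp: carrier_FG reduced_winv set_winv)
  then show "\<exists>y\<in>carrier (FreeGroup n). y \<otimes>\<^bsub>FreeGroup n\<^esub> x = \<one>\<^bsub>FreeGroup n\<^esub>" by (force simp: mult_FG)
qed

lemma winv_carrier: "w \<in> carrier (FreeGroup n) \<Longrightarrow> winv w \<in> carrier (FreeGroup n)"
  by (auto simp: carrier_FG reduced_winv set_winv)

lemma inv_FG: "w \<in> carrier (FreeGroup n) \<Longrightarrow> inv\<^bsub>FreeGroup n\<^esub> w = winv w"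
  by (rule group.inv_equality[OF group_FG]) (auto simp: winv_carrier mult_FG)


definition ltr :: "('g,'m) monoid_scheme \<Rightarrow> (nat \<Rightarrow> 'g) \<Rightarrow> letter \<Rightarrow> 'g" where
  "ltr G f l = (if fst l then inv\<^bsub>G\<^esub> (f (snd l)) else f (snd l))"

definition ev :: "('g,'m) monoid_scheme \<Rightarrow> (nat \<Rightarrow> 'g) \<Rightarrow> letter list \<Rightarrow> 'g" where
  "ev G f w = foldr (\<lambda>l acc. ltr G f l \<otimes>\<^bsub>G\<^esub> acc) w \<one>\<^bsub>G\<^esub>"

lemma ev_Nil[simp]: "ev G f [] = \<one>\<^bsub>G\<^esub>" by (simp add: ev_def)
lemma ev_Cons[simp]: "ev G f (l # w) = ltr G f l \<otimes>\<^bsub>G\<^esub> ev G f w" by (simp add: ev_def)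

lemma ev_cong: "\<forall>l\<in>set w. f (snd l) = g (snd l) \<Longrightarrow> ev G f w = ev G g w"
  by (induction w) (auto simp: ltr_def)

context group
begin

lemma ltr_closed: "f (snd l) \<in> carrier G \<Longrightarrow> ltr G f l \<in> carrier G"
  by (simp add: ltr_def)

lemma ev_closed: "\<forall>l\<in>set w. f (snd l) \<in> carrier G \<Longrightarrow> ev G f w \<in> carrier G"
  by (induction w) (auto simp: ltr_closed)

lemma ev_append:
  assumes "\<forall>l\<in>set u. f (snd l) \<in> carrier G" "\<forall>l\<in>set v. f (snd l) \<in> carrier G"
  shows "ev G f (u @ v) = ev G f u \<otimes> ev G f v"
  using assms by (induction u) (auto simp: ltr_closed ev_closed m_assoc)

lemma ltr_linv: "f (snd l) \<in> carrier G \<Longrightarrow> ltr G f (linv l) = inv (ltr G f l)"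
  by (auto simp: ltr_def linv_def)

lemma ev_red1:
  assumes "f (snd l) \<in> carrier G" "\<forall>x\<in>set s. f (snd x) \<in> carrier G"
  shows "ev G f (red1 l s) = ltr G f l \<otimes> ev G f s"
proof (cases s)
  case Nil then show ?thesis using assms by (simp add: red1_def ltr_closed)
next
  case (Cons m ms)
  show ?thesis
  proof (cases "inv_pair l m")
    case True
    then have m: "m = linv l" by (simp add: inv_pair_iff)
    have "ltr G f l \<otimes> ev G f s = ltr G f l \<otimes> (inv (ltr G f l) \<otimes> ev G f ms)"
      using Cons m assms by (simp add: ltr_linv)
    also have "\<dots> = ev G f ms" using assms Cons
      by (simp add: m_assoc[symmetric] ltr_closed ev_closed)
    finally show ?thesis using Cons True by (simp add: red1_def)
  next
    case False then show ?thesis using Cons by (simp add: red1_def)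
  qed
qed

lemma ev_red: "\<forall>x\<in>set w. f (snd x) \<in> carrier G \<Longrightarrow> ev G f (red w) = ev G f w"
proof (induction w)
  case Nil then show ?case by simp
next
  case (Cons l w)
  have "\<forall>x\<in>set (red w). f (snd x) \<in> carrier G" using Cons.prems set_red by auto
  then show ?case using Cons by (simp add: ev_red1)
qed

lemma ev_winv: "\<forall>x\<in>set w. f (snd x) \<in> carrier G \<Longrightarrow> ev G f (winv w) = inv (ev G f w)"
proof (induction w)
  case Nil then show ?case by simp
next
  case (Cons l w)
  have "\<forall>x\<in>set (winv w). f (snd x) \<in> carrier G" using Cons.prems by (auto simp: set_winv)
  then have "ev G f (winv (l # w)) = ev G f (winv w) \<otimes> (inv (ltr G f l) \<otimes> \<one>)"
    using Cons.prems by (simp add: ev_append ltr_linv)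
  also have "\<dots> = inv (ev G f w) \<otimes> inv (ltr G f l)"
    using Cons by (simp add: ltr_closed)
  also have "\<dots> = inv (ltr G f l \<otimes> ev G f w)"
    using Cons.prems by (simp add: inv_mult_group ltr_closed ev_closed)
  finally show ?case by simp
qed

end

lemma carrier_FG_letters: "w \<in> carrier (FreeGroup n) \<Longrightarrow> l \<in> set w \<Longrightarrow> snd l \<in> {1..n}"
  by (auto simp: carrier_FG)

lemma ev_hom:
  assumes G: "group G" and f: "\<forall>a\<in>{1..n}. f a \<in> carrier G"
  shows "ev G f \<in> hom (FreeGroup n) G"
proof (rule homI)
  fix x assume "x \<in> carrier (FreeGroup n)"
  then show "ev G f x \<in> carrier G" using f by (auto intro!: group.ev_closed[OF G] simp: carrier_FG)
next
  fix x y assume x: "x \<in> carrier (FreeGroup n)" and y: "y \<in> carrier (FreeGroup n)"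
  have fx: "\<forall>l\<in>set x. f (snd l) \<in> carrier G" "\<forall>l\<in>set y. f (snd l) \<in> carrier G"
    using x y f by (auto simp: carrier_FG)
  then have "\<forall>l\<in>set (x @ y). f (snd l) \<in> carrier G" by auto
  then show "ev G f (x \<otimes>\<^bsub>FreeGroup n\<^esub> y) = ev G f x \<otimes>\<^bsub>G\<^esub> ev G f y"
    using fx by (simp add: group.ev_red[OF G] group.ev_append[OF G] mult_FG)
qed

lemma gen_carrier: "a \<in> {1..n} \<Longrightarrow> gen a \<in> carrier (FreeGroup n)"
  by (simp add: carrier_FG gen_def)

lemma carrier_Cons:
  "l # w \<in> carrier (FreeGroup n) \<Longrightarrow> w \<in> carrier (FreeGroup n) \<and> [l] \<in> carrier (FreeGroup n)"
  by (auto simp: carrier_FG reduced_Cons)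

lemma Cons_mult: "l # w \<in> carrier (FreeGroup n) \<Longrightarrow> l # w = [l] \<otimes>\<^bsub>FreeGroup n\<^esub> w"
  using red_reduced[of "l # w"] by (simp add: carrier_FG mult_FG)

lemma single_ltr: "[l] \<in> carrier (FreeGroup n) \<Longrightarrow> [l] = ltr (FreeGroup n) gen l"
  using inv_FG[of "gen (snd l)" n]
  by (cases l) (auto simp: ltr_def gen_def carrier_FG linv_def)

lemma hom_ev_eq:
  assumes G: "group G" and h: "h \<in> hom (FreeGroup n) G" and w: "w \<in> carrier (FreeGroup n)"
  shows "h w = ev G (\<lambda>a. h (gen a)) w"
  using w
proof (induction w)
  case Nil
  interpret gh: group_hom "FreeGroup n" G h by (simp add: group_hom_def group_hom_axioms_def G group_FG h)
  show ?case using gh.hom_one by simp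
next
  case (Cons l w)
  interpret gh: group_hom "FreeGroup n" G h by (simp add: group_hom_def group_hom_axioms_def G group_FG h)
  have w: "w \<in> carrier (FreeGroup n)" and l: "[l] \<in> carrier (FreeGroup n)"
    using carrier_Cons[OF Cons.prems] by auto
  have a: "gen (snd l) \<in> carrier (FreeGroup n)" using l by (auto simp: carrier_FG gen_def)
  have "h (l # w) = h ([l] \<otimes>\<^bsub>FreeGroup n\<^esub> w)" by (metis Cons_mult Cons.prems)
  also have "\<dots> = h [l] \<otimes>\<^bsub>G\<^esub> h w" by (rule hom_mult[OF h l w])
  finally have "h (l # w) = h [l] \<otimes>\<^bsub>G\<^esub> h w" .
  moreover have "h [l] = ltr G (\<lambda>a. h (gen a)) l"
    using single_ltr[OF l] a by (simp add: ltr_def gh.hom_inv)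
  ultimately show ?case using Cons.IH[OF w] by simp
qed

lemma ev_gen: "w \<in> carrier (FreeGroup n) \<Longrightarrow> ev (FreeGroup n) gen w = w"
proof (induction w)
  case Nil then show ?case by simp
next
  case (Cons l w)
  have w: "w \<in> carrier (FreeGroup n)" and l: "[l] \<in> carrier (FreeGroup n)"
    using carrier_Cons[OF Cons.prems] by auto
  have "ev (FreeGroup n) gen (l # w) = ltr (FreeGroup n) gen l \<otimes>\<^bsub>FreeGroup n\<^esub> ev (FreeGroup n) gen w"
    by (rule ev_Cons)
  also have "\<dots> = [l] \<otimes>\<^bsub>FreeGroup n\<^esub> w" by (simp only: Cons.IH[OF w] single_ltr[OF l, symmetric])
  also have "\<dots> = l # w" by (rule Cons_mult[symmetric, OF Cons.prems])
  finally show ?case .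
qed

lemma hom_eq_gens:
  assumes G: "group G" and h1: "h1 \<in> hom (FreeGroup n) G" and h2: "h2 \<in> hom (FreeGroup n) G"
    and eq: "\<forall>a\<in>{1..n}. h1 (gen a) = h2 (gen a)" and w: "w \<in> carrier (FreeGroup n)"
  shows "h1 w = h2 w"
proof -
  have "ev G (\<lambda>a. h1 (gen a)) w = ev G (\<lambda>a. h2 (gen a)) w"
    using w eq by (intro ev_cong) (auto simp: carrier_FG)
  then show ?thesis using hom_ev_eq[OF G h1 w] hom_ev_eq[OF G h2 w] by simp
qed

lemma hom_ev_comm:
  assumes G: "group G" and H: "group H" and k: "k \<in> hom G H"
    and f: "\<forall>l\<in>set w. f (snd l) \<in> carrier G"
  shows "k (ev G f w) = ev H (\<lambda>a. k (f a)) w"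
  using f
proof (induction w)
  case Nil
  interpret gh: group_hom G H k by (simp add: group_hom_def group_hom_axioms_def G H k)
  show ?case by simp
next
  case (Cons l w)
  interpret gh: group_hom G H k by (simp add: group_hom_def group_hom_axioms_def G H k)
  have "k (ev G f (l # w)) = k (ltr G f l) \<otimes>\<^bsub>H\<^esub> k (ev G f w)"
    using Cons.prems by (simp add: group.ltr_closed[OF G] group.ev_closed[OF G])
  moreover have "k (ltr G f l) = ltr H (\<lambda>a. k (f a)) l"
    using Cons.prems by (simp add: ltr_def gh.hom_inv)
  ultimately show ?case using Cons by simp
qed

lemma carrier_generate: "carrier (FreeGroup n) = generate (FreeGroup n) (gen ` {1..n})"
proof
  show "generate (FreeGroup n) (gen ` {1..n}) \<subseteq> carrier (FreeGroup n)"
    by (rule group.generate_incl[OF group_FG]) (auto simp: gen_carrier)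
next
  show "carrier (FreeGroup n) \<subseteq> generate (FreeGroup n) (gen ` {1..n})"
  proof
    fix w assume w: "w \<in> carrier (FreeGroup n)"
    have "\<forall>l\<in>set w. snd l \<in> {1..n}" using w by (auto simp: carrier_FG)
    then have "ev (FreeGroup n) gen w \<in> generate (FreeGroup n) (gen ` {1..n})"
    proof (induction w)
      case Nil show ?case using generate.one[of "FreeGroup n"] by simp
    next
      case (Cons l w)
      then have "ltr (FreeGroup n) gen l \<in> generate (FreeGroup n) (gen ` {1..n})"
        by (auto simp: ltr_def intro: generate.incl generate.inv)
      then show ?case using Cons by (auto intro: generate.eng)
    qed
    then show "w \<in> generate (FreeGroup n) (gen ` {1..n})" using ev_gen[OF w] by simp
  qed
qed


lemma group_F3: "group F3" by (rule group_FG)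
lemma group_Aut: "group AutF3" by (rule group.AutoGroup[OF group_FG])

interpretation F3: group F3 by (rule group_F3)
interpretation Aut: group AutF3 by (rule group_Aut)

lemma carrier_Aut: "carrier AutF3 = auto F3" by (simp add: AutoGroup_def)

lemma auto_Bij: "f \<in> auto F3 \<Longrightarrow> f \<in> Bij (carrier F3)" by (simp add: auto_def)
lemma auto_hom: "f \<in> auto F3 \<Longrightarrow> f \<in> hom F3 F3" by (simp add: auto_def)
lemma auto_closed: "f \<in> auto F3 \<Longrightarrow> x \<in> carrier F3 \<Longrightarrow> f x \<in> carrier F3"
  by (rule hom_in_carrier[OF auto_hom])
lemma auto_ext: "f \<in> auto F3 \<Longrightarrow> f \<in> extensional (carrier F3)"
  by (simp add: auto_def Bij_def)

lemma Aut_mult: "f \<in> auto F3 \<Longrightarrow> g \<in> auto F3 \<Longrightarrow> f \<otimes>\<^bsub>AutF3\<^esub> g = compose (carrier F3) f g"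
  by (simp add: AutoGroup_def BijGroup_def auto_def)

lemma Aut_mult_apply: "f \<in> auto F3 \<Longrightarrow> g \<in> auto F3 \<Longrightarrow> x \<in> carrier F3 \<Longrightarrow> (f \<otimes>\<^bsub>AutF3\<^esub> g) x = f (g x)"
  by (simp add: Aut_mult compose_def)

lemma Aut_one: "\<one>\<^bsub>AutF3\<^esub> = (\<lambda>x\<in>carrier F3. x)"
  by (simp add: AutoGroup_def BijGroup_def)

lemma Aut_inv_closed: "f \<in> auto F3 \<Longrightarrow> inv\<^bsub>AutF3\<^esub> f \<in> auto F3"
  using group.inv_closed[OF group_Aut] by (simp add: carrier_Aut)

lemma Aut_inv_apply1: "f \<in> auto F3 \<Longrightarrow> x \<in> carrier F3 \<Longrightarrow> f ((inv\<^bsub>AutF3\<^esub> f) x) = x"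
proof -
  assume f: "f \<in> auto F3" and x: "x \<in> carrier F3"
  have "(f \<otimes>\<^bsub>AutF3\<^esub> inv\<^bsub>AutF3\<^esub> f) x = \<one>\<^bsub>AutF3\<^esub> x"
    using group.r_inv[OF group_Aut] f by (simp add: carrier_Aut)
  then show ?thesis using f x Aut_inv_closed by (simp add: Aut_mult_apply Aut_one)
qed

lemma Aut_inv_apply2: "f \<in> auto F3 \<Longrightarrow> x \<in> carrier F3 \<Longrightarrow> (inv\<^bsub>AutF3\<^esub> f) (f x) = x"
proof -
  assume f: "f \<in> auto F3" and x: "x \<in> carrier F3"
  have "(inv\<^bsub>AutF3\<^esub> f \<otimes>\<^bsub>AutF3\<^esub> f) x = \<one>\<^bsub>AutF3\<^esub> x"
    using group.l_inv[OF group_Aut] f by (simp add: carrier_Aut)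
  then show ?thesis using f x Aut_inv_closed by (simp add: Aut_mult_apply Aut_one)
qed

lemma id_hom_F3: "(\<lambda>x\<in>carrier F3. x) \<in> hom F3 F3"
  by (rule homI) auto

lemma auto_eq:
  assumes f: "f \<in> auto F3" and g: "g \<in> auto F3" and eq: "\<forall>a\<in>{1..3}. f (gen a) = g (gen a)"
  shows "f = g"
proof (rule extensionalityI[OF auto_ext[OF f] auto_ext[OF g]])
  fix x assume "x \<in> carrier F3"
  then show "f x = g x" using hom_eq_gens[OF group_F3 auto_hom[OF f] auto_hom[OF g] eq] by simp
qed

lemma auto_pairI:
  assumes f: "f \<in> hom F3 F3" and g: "g \<in> hom F3 F3"
    and fe: "f \<in> extensional (carrier F3)" and ge: "g \<in> extensional (carrier F3)"
    and fg: "\<forall>a\<in>{1..3}. f (g (gen a)) = gen a" and gf: "\<forall>a\<in>{1..3}. g (f (gen a)) = gen a"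
  shows "f \<in> auto F3" "g \<in> auto F3" "f \<otimes>\<^bsub>AutF3\<^esub> g = \<one>\<^bsub>AutF3\<^esub>" "inv\<^bsub>AutF3\<^esub> f = g"
proof -
  have c1: "compose (carrier F3) f g \<in> hom F3 F3" using group.hom_compose[OF group_F3 g f] .
  have c2: "compose (carrier F3) g f \<in> hom F3 F3" using group.hom_compose[OF group_F3 f g] .
  have fgx: "f (g x) = x" if x: "x \<in> carrier F3" for x
  proof -
    have "compose (carrier F3) f g x = (\<lambda>x\<in>carrier F3. x) x"
      by (rule hom_eq_gens[OF group_F3 c1 id_hom_F3 _ x]) (auto simp: compose_def fg gen_carrier)
    then show ?thesis using x by (simp add: compose_def)
  qed
  have gfx: "g (f x) = x" if x: "x \<in> carrier F3" for x
  proof -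
    have "compose (carrier F3) g f x = (\<lambda>x\<in>carrier F3. x) x"
      by (rule hom_eq_gens[OF group_F3 c2 id_hom_F3 _ x]) (auto simp: compose_def gf gen_carrier)
    then show ?thesis using x by (simp add: compose_def)
  qed
  have fc: "f \<in> carrier F3 \<rightarrow> carrier F3" and gc: "g \<in> carrier F3 \<rightarrow> carrier F3"
    using f g by (auto simp: hom_def)
  have "bij_betw f (carrier F3) (carrier F3)"
    by (rule bij_betw_byWitness[where f'=g]) (use fgx gfx fc gc in auto)
  then show fa: "f \<in> auto F3" using f fe by (simp add: auto_def Bij_def)
  have "bij_betw g (carrier F3) (carrier F3)"
    by (rule bij_betw_byWitness[where f'=f]) (use fgx gfx fc gc in auto)
  then show ga: "g \<in> auto F3" using g ge by (simp add: auto_def Bij_def)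
  show m: "f \<otimes>\<^bsub>AutF3\<^esub> g = \<one>\<^bsub>AutF3\<^esub>"
    using fa ga fgx by (auto simp: Aut_mult Aut_one compose_def)
  have "g \<otimes>\<^bsub>AutF3\<^esub> f = \<one>\<^bsub>AutF3\<^esub>"
    using fa ga gfx by (auto simp: Aut_mult Aut_one compose_def)
  then show "inv\<^bsub>AutF3\<^esub> f = g"
    using group.inv_equality[OF group_Aut] fa ga by (simp add: carrier_Aut)
qed

lemma subst_Nil[simp]: "subst f [] = []" by (simp add: subst_def)

lemma subst_ev:
  assumes "\<forall>l\<in>set w. f (snd l) \<in> carrier F3"
  shows "subst f w = ev F3 f w"
  using assms
proof (induction w)
  case Nil then show ?case by simp
next
  case (Cons l w)
  obtain b a where l: "l = (b, a)" by (cases l)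
  have fa: "f a \<in> carrier F3" using Cons.prems l by auto
  have "subst f (l # w) = red ((if b then winv (f a) else f a) @ red (concat (map (\<lambda>(b, a). if b then winv (f a) else f a) w)))"
    using l by (simp add: subst_def del: red_Cons)
  also have "\<dots> = red (ltr F3 f l @ ev F3 f w)"
    using Cons fa l by (simp add: subst_def ltr_def inv_FG del: red_Cons)
  also have "\<dots> = ev F3 f (l # w)" by (simp add: mult_FG del: red_Cons)
  finally show ?case .
qed

lemma subst_hom_restrict:
  assumes "\<forall>a\<in>{1..3}. f a \<in> carrier F3"
  shows "restrict (subst f) (carrier F3) \<in> hom F3 F3"
proof (rule group.hom_restrict[OF group_F3 ev_hom[OF group_F3 assms]])
  fix w assume w: "w \<in> carrier F3"
  have "\<forall>l\<in>set w. f (snd l) \<in> carrier F3"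
  proof
    fix l assume "l \<in> set w"
    then have "snd l \<in> {1..3}" using w by (auto simp: carrier_FG)
    then show "f (snd l) \<in> carrier F3" using assms by blast
  qed
  then show "ev F3 f w = restrict (subst f) (carrier F3) w"
    using w by (simp add: subst_ev)
qed

lemma subst_gen: "a \<in> {1..3} \<Longrightarrow> f a \<in> carrier F3 \<Longrightarrow> subst f (gen a) = f a"
  by (simp add: subst_def gen_def carrier_FG red_reduced del: red_Cons)

definition fx :: "nat \<Rightarrow> nat \<Rightarrow> nat \<Rightarrow> letter list" where
  "fx i j = (\<lambda>l. if l = i then [(True,j),(False,i),(False,j)] else [(False,l)])"
definition fx' :: "nat \<Rightarrow> nat \<Rightarrow> nat \<Rightarrow> letter list" where
  "fx' i j = (\<lambda>l. if l = i then [(False,j),(False,i),(True,j)] else [(False,l)])"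
definition xi' :: "nat \<Rightarrow> nat \<Rightarrow> letter list \<Rightarrow> letter list" where
  "xi' i j = restrict (subst (fx' i j)) (carrier F3)"

lemma xi_fx: "xi i j = restrict (subst (fx i j)) (carrier F3)"
  by (simp add: xi_def fx_def)

lemma fx_carrier: "i \<in> {1..3} \<Longrightarrow> j \<in> {1..3} \<Longrightarrow> i \<noteq> j \<Longrightarrow> a \<in> {1..3} \<Longrightarrow> fx i j a \<in> carrier F3"
  by (auto simp: fx_def carrier_FG inv_pair_def)
lemma fx'_carrier: "i \<in> {1..3} \<Longrightarrow> j \<in> {1..3} \<Longrightarrow> i \<noteq> j \<Longrightarrow> a \<in> {1..3} \<Longrightarrow> fx' i j a \<in> carrier F3"
  by (auto simp: fx'_def carrier_FG inv_pair_def)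

lemma xi_gen: "i \<in> {1..3} \<Longrightarrow> j \<in> {1..3} \<Longrightarrow> i \<noteq> j \<Longrightarrow> a \<in> {1..3} \<Longrightarrow> xi i j (gen a) = fx i j a"
  by (simp add: xi_fx gen_carrier subst_gen fx_carrier)
lemma xi'_gen: "i \<in> {1..3} \<Longrightarrow> j \<in> {1..3} \<Longrightarrow> i \<noteq> j \<Longrightarrow> a \<in> {1..3} \<Longrightarrow> xi' i j (gen a) = fx' i j a"
  by (simp add: xi'_def gen_carrier subst_gen fx'_carrier)

lemma xi_gen_other: "i \<in> {1..3} \<Longrightarrow> j \<in> {1..3} \<Longrightarrow> i \<noteq> j \<Longrightarrow> a \<in> {1..3} \<Longrightarrow> a \<noteq> i \<Longrightarrow> xi i j (gen a) = gen a"
  by (subst xi_gen) (auto simp: fx_def gen_def)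
lemma xi'_gen_other: "i \<in> {1..3} \<Longrightarrow> j \<in> {1..3} \<Longrightarrow> i \<noteq> j \<Longrightarrow> a \<in> {1..3} \<Longrightarrow> a \<noteq> i \<Longrightarrow> xi' i j (gen a) = gen a"
  by (subst xi'_gen) (auto simp: fx'_def gen_def)

lemma xi_hom: "i \<in> {1..3} \<Longrightarrow> j \<in> {1..3} \<Longrightarrow> i \<noteq> j \<Longrightarrow> xi i j \<in> hom F3 F3"
  unfolding xi_fx by (rule subst_hom_restrict) (simp add: fx_carrier)
lemma xi'_hom: "i \<in> {1..3} \<Longrightarrow> j \<in> {1..3} \<Longrightarrow> i \<noteq> j \<Longrightarrow> xi' i j \<in> hom F3 F3"
  unfolding xi'_def by (rule subst_hom_restrict) (simp add: fx'_carrier)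

lemma xi_apply: "w \<in> carrier F3 \<Longrightarrow> xi i j w = subst (fx i j) w"
  by (simp add: xi_fx)
lemma xi'_apply: "w \<in> carrier F3 \<Longrightarrow> xi' i j w = subst (fx' i j) w"
  by (simp add: xi'_def)

lemma xi_pair:
  assumes "i \<in> {1..3}" "j \<in> {1..3}" "i \<noteq> j"
  shows "xi i j \<in> auto F3" "xi' i j \<in> auto F3" "inv\<^bsub>AutF3\<^esub> (xi i j) = xi' i j"
proof -
  have c1: "[(False,j),(False,i),(True,j)] \<in> carrier F3" "[(True,j),(False,i),(False,j)] \<in> carrier F3"
    using assms by (auto simp: carrier_FG inv_pair_def)
  have fg: "\<forall>a\<in>{1..3}. xi i j (xi' i j (gen a)) = gen a"
  proof
    fix a :: nat assume a: "a \<in> {1..3}"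
    show "xi i j (xi' i j (gen a)) = gen a"
    proof (cases "a = i")
      case True
      have "xi' i j (gen a) = [(False,j),(False,i),(True,j)]"
        using True assms a by (simp add: xi'_gen fx'_def)
      moreover have "xi i j [(False,j),(False,i),(True,j)] = gen a"
        using True assms a c1 by (simp add: xi_apply subst_def fx_def inv_pair_def red1_def gen_def)
      ultimately show ?thesis by simp
    next
      case False
      then show ?thesis using assms a by (simp add: xi'_gen_other xi_gen_other)
    qed
  qed
  have gf: "\<forall>a\<in>{1..3}. xi' i j (xi i j (gen a)) = gen a"
  proof
    fix a :: nat assume a: "a \<in> {1..3}"
    show "xi' i j (xi i j (gen a)) = gen a"
    proof (cases "a = i")
      case True
      have "xi i j (gen a) = [(True,j),(False,i),(False,j)]"
        using True assms a by (simp add: xi_gen fx_def)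
      moreover have "xi' i j [(True,j),(False,i),(False,j)] = gen a"
        using True assms a c1 by (simp add: xi'_apply subst_def fx'_def inv_pair_def red1_def gen_def)
      ultimately show ?thesis by simp
    next
      case False
      then show ?thesis using assms a by (simp add: xi'_gen_other xi_gen_other)
    qed
  qed
  have e: "xi i j \<in> extensional (carrier F3)" "xi' i j \<in> extensional (carrier F3)"
    by (simp_all add: xi_fx xi'_def)
  note r = auto_pairI[OF xi_hom[OF assms] xi'_hom[OF assms] e fg gf]
  show "xi i j \<in> auto F3" "xi' i j \<in> auto F3" "inv\<^bsub>AutF3\<^esub> (xi i j) = xi' i j"
    using r by auto
qed


lemma carrier_F3_iff: "w \<in> carrier F3 \<longleftrightarrow> reduced w \<and> (\<forall>l\<in>set w. snd l \<in> {1..3})"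
  by (simp add: carrier_FG)

lemma red_snoc:
  assumes "reduced g"
  shows "red (g @ [x]) = (if g \<noteq> [] \<and> inv_pair (last g) x then butlast g else g @ [x])"
proof (cases "g \<noteq> [] \<and> inv_pair (last g) x")
  case True
  then obtain g' where g: "g = g' @ [linv x]"
    by (metis append_butlast_last_id inv_pair_iff inv_pair_sym linv_linv)
  have rg': "reduced g'" using assms g by (simp add: reduced_append)
  have "red (g @ [x]) = red (g' @ red [linv x, x])"
    using g by (metis append.assoc append_Cons append_Nil red_append_right)
  also have "red [linv x, x] = []" by (simp add: red1_def inv_pair_iff)
  finally show ?thesis using True g rg' by (simp add: red_reduced del: red_Cons)
next
  case False
  then have "reduced (g @ [x])" using assms by (auto simp: reduced_append)
  then have "red (g @ [x]) = g @ [x]" by (rule red_reduced)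
  then show ?thesis using False by auto
qed

lemma snoc_eq_Cons: "xs @ [y] = x # xs \<Longrightarrow> x = y \<and> (\<forall>z\<in>set xs. z = x)"
proof (induction xs arbitrary: x)
  case Nil then show ?case by simp
next
  case (Cons a xs)
  then have "a = x" "xs @ [y] = a # xs" by auto
  then show ?case using Cons.IH by auto
qed

lemma butlast_eq_tl: "butlast (a # r) = r \<Longrightarrow> \<forall>z\<in>set r. z = a"
proof (cases "r = []")
  case True then show ?thesis by simp
next
  case False
  assume h: "butlast (a # r) = r"
  then have "a # butlast r = butlast r @ [last r]" using False by (simp add: append_butlast_last_id)
  from this[symmetric] have "a = last r \<and> (\<forall>z\<in>set (butlast r). z = a)" by (rule snoc_eq_Cons)
  moreover have "set r \<subseteq> insert (last r) (set (butlast r))" using False by (cases r rule: rev_cases) auto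
  ultimately show ?thesis by blast
qed

lemma reduced_replicate: "reduced (replicate n l)"
  by (induction n) (auto simp: reduced_Cons inv_pair_def)

lemma gen_pow_nat: "a \<in> {1..3} \<Longrightarrow> gen a [^]\<^bsub>F3\<^esub> (n::nat) = replicate n (False, a)"
proof (induction n)
  case 0 then show ?case by simp
next
  case (Suc n)
  have "gen a [^]\<^bsub>F3\<^esub> Suc n = red (replicate n (False, a) @ [(False, a)])"
    using Suc by (simp add: mult_FG gen_def del: red_Cons)
  also have "\<dots> = replicate (Suc n) (False, a)"
  proof -
    have "replicate n (False, a) @ [(False, a)] = replicate (Suc n) (False, a)" by (simp add: replicate_append_same)
    then show ?thesis by (simp only: red_reduced[OF reduced_replicate])
  qed
  finally show ?case .
qed

lemma inv_gen: "a \<in> {1..3} \<Longrightarrow> inv\<^bsub>F3\<^esub> (gen a) = [(True, a)]"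
  using inv_FG[OF gen_carrier[of a 3]] by (simp add: gen_def linv_def)

lemma inv_gen_pow_nat: "a \<in> {1..3} \<Longrightarrow> (inv\<^bsub>F3\<^esub> (gen a)) [^]\<^bsub>F3\<^esub> (n::nat) = replicate n (True, a)"
proof (induction n)
  case 0 then show ?case by simp
next
  case (Suc n)
  have "(inv\<^bsub>F3\<^esub> (gen a)) [^]\<^bsub>F3\<^esub> Suc n = red (replicate n (True, a) @ [(True, a)])"
    using Suc by (simp add: mult_FG inv_gen del: red_Cons)
  also have "\<dots> = replicate (Suc n) (True, a)"
  proof -
    have "replicate n (True, a) @ [(True, a)] = replicate (Suc n) (True, a)" by (simp add: replicate_append_same)
    then show ?thesis by (simp only: red_reduced[OF reduced_replicate])
  qed
  finally show ?case .
qed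

lemma replicate_gen_pow: "a \<in> {1..3} \<Longrightarrow> \<exists>m::int. replicate n (b, a) = gen a [^]\<^bsub>F3\<^esub> m"
proof (cases b)
  case True
  assume a: "a \<in> {1..3}"
  have "gen a [^]\<^bsub>F3\<^esub> (- int n) = inv\<^bsub>F3\<^esub> (gen a [^]\<^bsub>F3\<^esub> n)"
    using a by (simp add: F3.int_pow_neg_int gen_carrier)
  also have "\<dots> = (inv\<^bsub>F3\<^esub> (gen a)) [^]\<^bsub>F3\<^esub> n"
    using a by (simp add: F3.nat_pow_inv gen_carrier)
  finally show ?thesis using True a inv_gen_pow_nat by metis
next
  case False
  assume a: "a \<in> {1..3}"
  then show ?thesis using False gen_pow_nat[OF a, of n] int_pow_int by metis
qed

lemma centralizer:
  assumes g: "g \<in> carrier F3" and a: "a \<in> {1..3}"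
    and c: "g \<otimes>\<^bsub>F3\<^esub> gen a = gen a \<otimes>\<^bsub>F3\<^esub> g"
  shows "\<exists>m::int. g = gen a [^]\<^bsub>F3\<^esub> m"
proof -
  let ?x = "(False, a)"
  have rg: "reduced g" using g by (simp add: carrier_FG)
  have L: "g \<otimes>\<^bsub>F3\<^esub> gen a = (if g \<noteq> [] \<and> inv_pair (last g) ?x then butlast g else g @ [?x])"
    using red_snoc[OF rg] by (simp add: mult_FG gen_def del: red_Cons)
  have R: "gen a \<otimes>\<^bsub>F3\<^esub> g = red1 ?x g"
    using red_reduced[OF rg] by (simp add: mult_FG gen_def)
  show ?thesis
  proof (cases "g = []")
    case True
    then show ?thesis by (metis int_pow_0 one_FG)
  next
    case False
    then obtain h r where gr: "g = h # r" by (cases g) auto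
    show ?thesis
    proof (cases "inv_pair (last g) ?x")
      case True
      note lt = True
      show ?thesis
      proof (cases "inv_pair ?x h")
        case True
        then have "butlast g = r" using c L R lt gr False by (simp add: red1_def)
        then have "\<forall>z\<in>set r. z = h" using gr butlast_eq_tl by simp
        then have "g = replicate (length g) h" using gr by (simp add: replicate_length_same)
        then show ?thesis using replicate_gen_pow[OF a] True
          by (metis inv_pair_iff linv_def snd_conv)
      next
        case False
        then have "butlast g = ?x # g" using c L R lt gr \<open>g \<noteq> []\<close> by (simp add: red1_def)
        then have "length (butlast g) = length (?x # g)" by simp
        then show ?thesis by simp
      qed
    next
      case False
      note lt = False
      show ?thesis
      proof (cases "inv_pair ?x h")
        case True
        then have "g @ [?x] = r" using c L R lt gr by (simp add: red1_def)
        then have "length (g @ [?x]) = length r" by simp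
        then show ?thesis using gr by simp
      next
        case False
        then have "g @ [?x] = ?x # g" using c L R lt gr by (simp add: red1_def)
        then have "\<forall>z\<in>set g. z = ?x" using snoc_eq_Cons by metis
        then have "g = replicate (length g) ?x" by (simp add: replicate_length_same)
        then show ?thesis using gen_pow_nat[OF a] int_pow_int by metis
      qed
    qed
  qed
qed


definition sg :: "letter \<Rightarrow> int" where "sg l = (if fst l then -1 else 1)"
definition pfx :: "letter list \<Rightarrow> int" where
  "pfx y = sum_list (map sg (takeWhile (\<lambda>l. snd l = 1) y))"

lemma pfx_Nil[simp]: "pfx [] = 0" by (simp add: pfx_def)
lemma pfx_Cons1: "snd l = 1 \<Longrightarrow> pfx (l # y) = sg l + pfx y" by (simp add: pfx_def)
lemma pfx_Cons_other: "snd l \<noteq> 1 \<Longrightarrow> pfx (l # y) = 0" by (simp add: pfx_def)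

lemma sg_linv: "sg (linv l) = - sg l" by (simp add: sg_def linv_def)

lemma pfx_red1: "snd l = 1 \<Longrightarrow> reduced y \<Longrightarrow> pfx (red1 l y) = sg l + pfx y"
proof (cases y)
  case Nil
  assume "snd l = 1" then show ?thesis using Nil by (simp add: red1_def pfx_Cons1)
next
  case (Cons m ms)
  assume l: "snd l = 1"
  show ?thesis
  proof (cases "inv_pair l m")
    case True
    then have m: "m = linv l" by (simp add: inv_pair_iff)
    then have "pfx y = - sg l + pfx ms" using Cons l by (simp add: pfx_Cons1 sg_linv)
    then show ?thesis using Cons True by (simp add: red1_def)
  next
    case False
    then show ?thesis using Cons l by (simp add: red1_def pfx_Cons1)
  qed
qed

lemma pfx_gen1_mult: "y \<in> carrier F3 \<Longrightarrow> pfx (gen 1 \<otimes>\<^bsub>F3\<^esub> y) = 1 + pfx y"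
proof -
  assume y: "y \<in> carrier F3"
  then have r: "reduced y" by (simp add: carrier_FG)
  have "gen 1 \<otimes>\<^bsub>F3\<^esub> y = red1 (False, 1) y" using red_reduced[OF r] by (simp add: mult_FG gen_def)
  then show ?thesis using pfx_red1[OF _ r, of "(False,1)"] by (simp add: sg_def)
qed

lemma pfx_invgen1_mult: "y \<in> carrier F3 \<Longrightarrow> pfx (inv\<^bsub>F3\<^esub> (gen 1) \<otimes>\<^bsub>F3\<^esub> y) = -1 + pfx y"
proof -
  assume y: "y \<in> carrier F3"
  then have r: "reduced y" by (simp add: carrier_FG)
  have "inv\<^bsub>F3\<^esub> (gen 1) \<otimes>\<^bsub>F3\<^esub> y = red1 (True, 1) y" using red_reduced[OF r] inv_gen[of 1]
    by (simp add: mult_FG)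
  then show ?thesis using pfx_red1[OF _ r, of "(True,1)"] by (simp add: sg_def)
qed

lemma gen_in[simp]: "gen 1 \<in> carrier F3" "gen 2 \<in> carrier F3" "gen 3 \<in> carrier F3" "gen (Suc 0) \<in> carrier F3"
  by (simp_all add: gen_carrier)

lemma pfx_pow1: "y \<in> carrier F3 \<Longrightarrow> pfx (gen 1 [^]\<^bsub>F3\<^esub> (m::int) \<otimes>\<^bsub>F3\<^esub> y) = m + pfx y"
proof (induct m arbitrary: y rule: int_induct[where k=0])
  case base then show ?case by (auto simp: mult_FG carrier_FG red_reduced)
next
  case (step1 i)
  have g1: "gen 1 \<in> carrier F3" by (rule gen_carrier) simp
  have "gen 1 [^]\<^bsub>F3\<^esub> (i + 1) \<otimes>\<^bsub>F3\<^esub> y = (gen 1 [^]\<^bsub>F3\<^esub> i \<otimes>\<^bsub>F3\<^esub> gen 1) \<otimes>\<^bsub>F3\<^esub> y"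
    using F3.int_pow_mult[OF g1, of i 1] F3.int_pow_1[OF g1] by simp
  also have "\<dots> = gen 1 [^]\<^bsub>F3\<^esub> i \<otimes>\<^bsub>F3\<^esub> (gen 1 \<otimes>\<^bsub>F3\<^esub> y)"
    using F3.m_assoc[OF F3.int_pow_closed[OF g1] g1 step1.prems] .
  finally have e: "gen 1 [^]\<^bsub>F3\<^esub> (i + 1) \<otimes>\<^bsub>F3\<^esub> y = gen 1 [^]\<^bsub>F3\<^esub> i \<otimes>\<^bsub>F3\<^esub> (gen 1 \<otimes>\<^bsub>F3\<^esub> y)" .
  have "gen 1 \<otimes>\<^bsub>F3\<^esub> y \<in> carrier F3" using g1 step1.prems by (rule F3.m_closed)
  then show ?case unfolding e using step1.hyps(2) pfx_gen1_mult[OF step1.prems] by simp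
next
  case (step2 i)
  have g1: "gen 1 \<in> carrier F3" by (rule gen_carrier) simp
  have "gen 1 [^]\<^bsub>F3\<^esub> (i - 1) \<otimes>\<^bsub>F3\<^esub> y = (gen 1 [^]\<^bsub>F3\<^esub> i \<otimes>\<^bsub>F3\<^esub> inv\<^bsub>F3\<^esub> gen 1) \<otimes>\<^bsub>F3\<^esub> y"
    using F3.int_pow_mult[OF g1, of i "-1"] F3.int_pow_neg[OF g1, of 1] F3.int_pow_1[OF g1] by simp
  also have "\<dots> = gen 1 [^]\<^bsub>F3\<^esub> i \<otimes>\<^bsub>F3\<^esub> (inv\<^bsub>F3\<^esub> gen 1 \<otimes>\<^bsub>F3\<^esub> y)"
    using F3.m_assoc[OF F3.int_pow_closed[OF g1] F3.inv_closed[OF g1] step2.prems] .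
  finally have e: "gen 1 [^]\<^bsub>F3\<^esub> (i - 1) \<otimes>\<^bsub>F3\<^esub> y = gen 1 [^]\<^bsub>F3\<^esub> i \<otimes>\<^bsub>F3\<^esub> (inv\<^bsub>F3\<^esub> gen 1 \<otimes>\<^bsub>F3\<^esub> y)" .
  have "inv\<^bsub>F3\<^esub> gen 1 \<otimes>\<^bsub>F3\<^esub> y \<in> carrier F3" using F3.inv_closed[OF g1] step2.prems by (rule F3.m_closed)
  then show ?case unfolding e using step2.hyps(2) pfx_invgen1_mult[OF step2.prems] by simp
qed

lemma takeWhile_snoc_not: "\<not> P x \<Longrightarrow> takeWhile P (xs @ [x]) = takeWhile P xs"
  by (induction xs) auto

lemma pfx_snoc_other: "\<not> P x \<Longrightarrow> takeWhile P (xs @ [x]) = takeWhile P xs"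
  by (rule takeWhile_snoc_not)

lemma pfx_red_snoc: "reduced y \<Longrightarrow> snd l \<noteq> 1 \<Longrightarrow> pfx (red (y @ [l])) = pfx y"
proof -
  assume r: "reduced y" and l: "snd l \<noteq> 1"
  show ?thesis
  proof (cases "y \<noteq> [] \<and> inv_pair (last y) l")
    case True
    then have sl: "snd (last y) \<noteq> 1" using l by (simp add: inv_pair_def)
    have yy: "y = butlast y @ [last y]" using True by simp
    have "takeWhile (\<lambda>l. snd l = 1) (butlast y @ [last y]) = takeWhile (\<lambda>l. snd l = 1) (butlast y)"
      by (rule takeWhile_snoc_not) (use sl in simp)
    then have "pfx y = pfx (butlast y)" unfolding pfx_def using yy by metis
    moreover have "red (y @ [l]) = butlast y" using True red_snoc[OF r] by simp
    ultimately show ?thesis by simp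
  next
    case False
    then have "red (y @ [l]) = y @ [l]" using red_snoc[OF r, of l] by auto
    moreover have "takeWhile (\<lambda>l. snd l = 1) (y @ [l]) = takeWhile (\<lambda>l. snd l = 1) y"
      by (rule takeWhile_snoc_not) (use l in simp)
    ultimately show ?thesis unfolding pfx_def by simp
  qed
qed

lemma pfx_mult_gen_other: "y \<in> carrier F3 \<Longrightarrow> j \<in> {2,3} \<Longrightarrow> pfx (y \<otimes>\<^bsub>F3\<^esub> gen j) = pfx y"
proof -
  assume y: "y \<in> carrier F3" and j: "j \<in> {2,3}"
  have r: "reduced y" using y by (simp add: carrier_FG)
  have "y \<otimes>\<^bsub>F3\<^esub> gen j = red (y @ [(False, j)])" by (simp only: mult_FG gen_def)
  moreover have "snd (False, j) \<noteq> 1" using j by auto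
  ultimately show ?thesis using pfx_red_snoc[OF r] by metis
qed

lemma pfx_mult_invgen_other: "y \<in> carrier F3 \<Longrightarrow> j \<in> {2,3} \<Longrightarrow> pfx (y \<otimes>\<^bsub>F3\<^esub> inv\<^bsub>F3\<^esub> (gen j)) = pfx y"
proof -
  assume y: "y \<in> carrier F3" and j: "j \<in> {2,3}"
  have r: "reduced y" using y by (simp add: carrier_FG)
  have "inv\<^bsub>F3\<^esub> (gen j) = [(True, j)]" using j by (intro inv_gen) auto
  then have "y \<otimes>\<^bsub>F3\<^esub> inv\<^bsub>F3\<^esub> (gen j) = red (y @ [(True, j)])" by (simp only: mult_FG)
  moreover have "snd (True, j) \<noteq> 1" using j by auto
  ultimately show ?thesis using pfx_red_snoc[OF r] by metis
qed

lemma pfx_mult_pow_other: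
  assumes j: "j \<in> {2,3}"
  shows "y \<in> carrier F3 \<Longrightarrow> pfx (y \<otimes>\<^bsub>F3\<^esub> gen j [^]\<^bsub>F3\<^esub> (m::int)) = pfx y"
proof (induct m arbitrary: y rule: int_induct[where k=0])
  case base then show ?case by (auto simp: mult_FG carrier_FG red_reduced)
next
  case (step1 i)
  have gj: "gen j \<in> carrier F3" using j by (auto simp: gen_carrier)
  have "y \<otimes>\<^bsub>F3\<^esub> gen j [^]\<^bsub>F3\<^esub> (i + 1) = y \<otimes>\<^bsub>F3\<^esub> (gen j [^]\<^bsub>F3\<^esub> i \<otimes>\<^bsub>F3\<^esub> gen j)"
    using F3.int_pow_mult[OF gj, of i 1] F3.int_pow_1[OF gj] by simp
  also have "\<dots> = (y \<otimes>\<^bsub>F3\<^esub> gen j [^]\<^bsub>F3\<^esub> i) \<otimes>\<^bsub>F3\<^esub> gen j"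
    using F3.m_assoc[OF step1.prems F3.int_pow_closed[OF gj] gj] by simp
  finally have e: "y \<otimes>\<^bsub>F3\<^esub> gen j [^]\<^bsub>F3\<^esub> (i + 1) = (y \<otimes>\<^bsub>F3\<^esub> gen j [^]\<^bsub>F3\<^esub> i) \<otimes>\<^bsub>F3\<^esub> gen j" .
  have "y \<otimes>\<^bsub>F3\<^esub> gen j [^]\<^bsub>F3\<^esub> i \<in> carrier F3" using step1.prems F3.int_pow_closed[OF gj] by (rule F3.m_closed)
  then show ?case unfolding e using step1.hyps(2)[OF step1.prems] pfx_mult_gen_other j by simp
next
  case (step2 i)
  have gj: "gen j \<in> carrier F3" using j by (auto simp: gen_carrier)
  have "y \<otimes>\<^bsub>F3\<^esub> gen j [^]\<^bsub>F3\<^esub> (i - 1) = y \<otimes>\<^bsub>F3\<^esub> (gen j [^]\<^bsub>F3\<^esub> i \<otimes>\<^bsub>F3\<^esub> inv\<^bsub>F3\<^esub> gen j)"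
    using F3.int_pow_mult[OF gj, of i "-1"] F3.int_pow_neg[OF gj, of 1] F3.int_pow_1[OF gj] by simp
  also have "\<dots> = (y \<otimes>\<^bsub>F3\<^esub> gen j [^]\<^bsub>F3\<^esub> i) \<otimes>\<^bsub>F3\<^esub> inv\<^bsub>F3\<^esub> gen j"
    using F3.m_assoc[OF step2.prems F3.int_pow_closed[OF gj] F3.inv_closed[OF gj]] by simp
  finally have e: "y \<otimes>\<^bsub>F3\<^esub> gen j [^]\<^bsub>F3\<^esub> (i - 1) = (y \<otimes>\<^bsub>F3\<^esub> gen j [^]\<^bsub>F3\<^esub> i) \<otimes>\<^bsub>F3\<^esub> inv\<^bsub>F3\<^esub> gen j" .
  have "y \<otimes>\<^bsub>F3\<^esub> gen j [^]\<^bsub>F3\<^esub> i \<in> carrier F3" using step2.prems F3.int_pow_closed[OF gj] by (rule F3.m_closed)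
  then show ?case unfolding e using step2.hyps(2)[OF step2.prems] pfx_mult_invgen_other j by simp
qed

lemma same_snd_cases: "snd a = snd b \<Longrightarrow> a = b \<or> inv_pair a b"
  by (cases a; cases b) (auto simp: inv_pair_def)

lemma sum_sg_reduced: "reduced y \<Longrightarrow> \<forall>l\<in>set y. snd l = 1 \<Longrightarrow> sum_list (map sg y) = sg (hd y) * int (length y)"
proof (induction y)
  case Nil then show ?case by simp
next
  case (Cons a y)
  show ?case
  proof (cases y)
    case Nil then show ?thesis by simp
  next
    case (Cons b ys)
    then have "a = b" using Cons.prems same_snd_cases[of a b] by auto
    then show ?thesis using Cons.IH Cons.prems \<open>y = b # ys\<close> by (simp add: reduced_Cons algebra_simps)
  qed
qed

lemma pfx_zero_iff: "reduced y \<Longrightarrow> pfx y = 0 \<longleftrightarrow> (y = [] \<or> snd (hd y) \<noteq> 1)"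
proof -
  assume r: "reduced y"
  let ?t = "takeWhile (\<lambda>l. snd l = 1) y"
  have "reduced ?t" using r reduced_append[of ?t "dropWhile (\<lambda>l. snd l = 1) y"] by simp
  moreover have "\<forall>l\<in>set ?t. snd l = 1" by (meson set_takeWhileD)
  ultimately have s: "pfx y = sg (hd ?t) * int (length ?t)" unfolding pfx_def by (rule sum_sg_reduced)
  have "sg (hd ?t) \<noteq> 0" by (simp add: sg_def)
  then have "pfx y = 0 \<longleftrightarrow> ?t = []" using s by simp
  also have "\<dots> \<longleftrightarrow> (y = [] \<or> snd (hd y) \<noteq> 1)" by (cases y) auto
  finally show ?thesis .
qed

lemma pow_replicate: "j \<in> {1..3} \<Longrightarrow> e \<noteq> 0 \<Longrightarrow> \<exists>n b. n > 0 \<and> gen j [^]\<^bsub>F3\<^esub> (e::int) = replicate n (b, j)"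
proof (cases "e < 0")
  case True
  assume j: "j \<in> {1..3}"
  have "gen j [^]\<^bsub>F3\<^esub> e = inv\<^bsub>F3\<^esub> (gen j [^]\<^bsub>F3\<^esub> nat (- e))" using True unfolding int_pow_def2[of F3 "gen j" e] by simp
  also have "\<dots> = (inv\<^bsub>F3\<^esub> (gen j)) [^]\<^bsub>F3\<^esub> nat (- e)" using j by (simp add: F3.nat_pow_inv gen_carrier)
  also have "\<dots> = replicate (nat (-e)) (True, j)" using j by (simp add: inv_gen_pow_nat)
  finally have "gen j [^]\<^bsub>F3\<^esub> e = replicate (nat (-e)) (True, j)" .
  then show ?thesis using True by (intro exI[of _ "nat (-e)"] exI[of _ True]) simp
next
  case False
  assume j: "j \<in> {1..3}" and e: "e \<noteq> 0"
  have "gen j [^]\<^bsub>F3\<^esub> e = gen j [^]\<^bsub>F3\<^esub> nat e" using False unfolding int_pow_def2[of F3 "gen j" e] by simp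
  also have "\<dots> = replicate (nat e) (False, j)" using j by (simp add: gen_pow_nat)
  finally have "gen j [^]\<^bsub>F3\<^esub> e = replicate (nat e) (False, j)" .
  then show ?thesis using False e by (intro exI[of _ "nat e"] exI[of _ False]) simp
qed


lemma red_conj_letter:
  assumes "snd l = j" "n > 0"
  shows "red ([l] @ replicate n (b, j) @ [linv l]) = replicate n (b, j)"
proof -
  obtain k where k: "n = Suc k" using assms(2) by (cases n) auto
  show ?thesis
  proof (cases "l = (b, j)")
    case True
    have e1: "replicate (Suc k) l = replicate k l @ [l]" by (simp add: replicate_append_same)
    have "red (replicate (Suc k) l @ [linv l]) = butlast (replicate (Suc k) l)"
      using red_snoc[OF reduced_replicate, of "Suc k" l "linv l"]
      by (simp add: inv_pair_iff del: red_Cons replicate_Suc)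
    also have "\<dots> = replicate k l" by (subst e1) simp
    finally have "red (replicate (Suc k) l @ [linv l]) = replicate k l" .
    moreover have "red1 l (replicate k l) = replicate (Suc k) l"
      by (cases k) (auto simp: red1_def inv_pair_def)
    ultimately show ?thesis using True k by simp
  next
    case False
    then have l: "l = linv (b, j)" using assms(1) by (cases l) (auto simp: linv_def)
    have "replicate n (b, j) @ [linv l] = replicate (Suc n) (b, j)"
      using l by (simp add: replicate_append_same)
    then have "red (replicate n (b, j) @ [linv l]) = replicate (Suc n) (b, j)"
      by (simp only: red_reduced[OF reduced_replicate])
    then show ?thesis using l by (simp add: red1_def inv_pair_iff)
  qed
qed

lemma conj_aux:
  assumes n: "n > 0" and j: "snd (b, j) = j"
  shows "reduced r \<Longrightarrow> \<exists>r1. red (r @ replicate n (b, j) @ winv r) = r1 @ replicate n (b, j) @ winv r1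
              \<and> (r1 \<noteq> [] \<longrightarrow> r \<noteq> [] \<and> hd r1 = hd r)"
proof (induction r rule: rev_induct)
  case Nil
  then show ?case by (intro exI[of _ "[]"]) (simp add: red_reduced reduced_replicate del: red_Cons)
next
  case (snoc l r0)
  have r0: "reduced r0" using snoc.prems by (simp add: reduced_append)
  show ?case
  proof (cases "snd l = j")
    case True
    have "red ((r0 @ [l]) @ replicate n (b, j) @ winv (r0 @ [l]))
          = red (r0 @ ([l] @ replicate n (b, j) @ [linv l]) @ winv r0)" by simp
    also have "\<dots> = red (r0 @ red ([l] @ replicate n (b, j) @ [linv l]) @ winv r0)"
      by (simp only: red_append_mid)
    also have "\<dots> = red (r0 @ replicate n (b, j) @ winv r0)"
      using red_conj_letter[OF True n] by simp
    finally show ?thesis using snoc.IH[OF r0] by (metis append_is_Nil_conv hd_append)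
  next
    case False
    let ?r = "r0 @ [l]"
    have rr: "reduced (winv ?r)" using snoc.prems by (rule reduced_winv)
    have hw: "hd (winv ?r) = linv l" by simp
    have lr: "last (replicate n (b, j)) = (b, j)" using n by simp
    have "\<not> inv_pair (b, j) (linv l)" using False by (simp add: inv_pair_def)
    then have A: "reduced (replicate n (b, j) @ winv ?r)"
      using rr n reduced_append[of "replicate n (b, j)" "winv ?r"] hw lr
      by (simp add: reduced_replicate del: winv_append)
    have hA: "hd (replicate n (b, j) @ winv ?r) = (b, j)" using n by simp
    have "\<not> inv_pair l (b, j)" using False by (simp add: inv_pair_def)
    then have "reduced (?r @ (replicate n (b, j) @ winv ?r))"
      using reduced_append[of ?r "replicate n (b, j) @ winv ?r"] A hA snoc.prems n
      by (simp del: winv_append append_assoc)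
    then show ?thesis by (intro exI[of _ ?r]) (simp add: red_reduced del: red_Cons)
  qed
qed

lemma M_struct:
  fixes b :: bool
  assumes r: "reduced r" and hr: "r = [] \<or> snd (hd r) \<noteq> 1" and j: "j \<noteq> 1" and n: "n > 0"
  defines "M \<equiv> red (r @ replicate n (b, j) @ winv r)"
  shows "M \<noteq> [] \<and> snd (hd M) \<noteq> 1 \<and> snd (last M) \<noteq> 1"
proof -
  obtain r1 where M: "M = r1 @ replicate n (b, j) @ winv r1" and h: "r1 \<noteq> [] \<longrightarrow> r \<noteq> [] \<and> hd r1 = hd r"
    using conj_aux[OF n _ r] M_def by auto
  show ?thesis
  proof (cases "r1 = []")
    case True then show ?thesis using M n j by (cases n) auto
  next
    case False
    have "last (winv r1) = linv (hd r1)" using False by (cases r1) (auto simp: winv_alt)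
    then show ?thesis using M False h hr n by auto
  qed
qed


declare one_FG[simp del]

lemma gen_carrier3: "a \<in> {1..3} \<Longrightarrow> gen a \<in> carrier F3" by (rule gen_carrier)

lemma F1:
  assumes G: "G \<in> carrier F3" and j: "j \<in> {2,3}" and e: "e \<noteq> 0" and z: "z \<in> carrier F3"
    and pz: "pfx z \<noteq> pfx G"
  shows "pfx (G \<otimes>\<^bsub>F3\<^esub> gen j [^]\<^bsub>F3\<^esub> (e::int) \<otimes>\<^bsub>F3\<^esub> inv\<^bsub>F3\<^esub> G \<otimes>\<^bsub>F3\<^esub> z) = pfx G"
proof -
  define q where "q = pfx G"
  define x1 where "x1 = gen 1"
  have x1c: "x1 \<in> carrier F3" unfolding x1_def by (rule gen_carrier) simp
  have gjc: "gen j \<in> carrier F3" using j by (intro gen_carrier) auto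
  define r where "r = x1 [^]\<^bsub>F3\<^esub> (-q) \<otimes>\<^bsub>F3\<^esub> G"
  have rc: "r \<in> carrier F3" unfolding r_def using x1c G by simp
  have pr: "pfx r = 0" unfolding r_def x1_def q_def using pfx_pow1[OF G, of "- pfx G"] by simp
  have rr: "reduced r" using rc by (simp add: carrier_FG)
  have hr: "r = [] \<or> snd (hd r) \<noteq> 1" using pfx_zero_iff[OF rr] pr by simp
  have Gr: "G = x1 [^]\<^bsub>F3\<^esub> q \<otimes>\<^bsub>F3\<^esub> r"
  proof -
    have "x1 [^]\<^bsub>F3\<^esub> q \<otimes>\<^bsub>F3\<^esub> r = (x1 [^]\<^bsub>F3\<^esub> q \<otimes>\<^bsub>F3\<^esub> x1 [^]\<^bsub>F3\<^esub> (-q)) \<otimes>\<^bsub>F3\<^esub> G"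
      unfolding r_def using x1c G by (simp add: F3.m_assoc)
    also have "\<dots> = G" using x1c G F3.int_pow_mult[OF x1c, of q "-q"] by simp
    finally show ?thesis by simp
  qed
  obtain n b where n: "n > 0" and E: "gen j [^]\<^bsub>F3\<^esub> e = replicate n (b, j)"
    using pow_replicate[of j e] j e by auto
  define z' where "z' = x1 [^]\<^bsub>F3\<^esub> (-q) \<otimes>\<^bsub>F3\<^esub> z"
  have z'c: "z' \<in> carrier F3" unfolding z'_def using x1c z by simp
  have pz': "pfx z' = -q + pfx z" unfolding z'_def x1_def using pfx_pow1[OF z] by simp
  then have "pfx z' \<noteq> 0" using pz q_def by simp
  then have hz': "z' \<noteq> [] \<and> snd (hd z') = 1" using pfx_zero_iff[of z'] z'c by (auto simp: carrier_FG)
  define M where "M = red (r @ replicate n (b, j) @ winv r)"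
  have MS: "M \<noteq> [] \<and> snd (hd M) \<noteq> 1 \<and> snd (last M) \<noteq> 1"
    unfolding M_def by (rule M_struct[OF rr hr _ n]) (use j in auto)
  have Meq: "r \<otimes>\<^bsub>F3\<^esub> gen j [^]\<^bsub>F3\<^esub> e \<otimes>\<^bsub>F3\<^esub> inv\<^bsub>F3\<^esub> r = M"
    unfolding M_def E using rc by (simp add: mult_FG inv_FG del: red_Cons)
  have Mz: "M \<otimes>\<^bsub>F3\<^esub> z' = M @ z'"
  proof -
    have "reduced M" unfolding M_def by (rule reduced_red)
    moreover have "reduced z'" using z'c by (simp add: carrier_FG)
    moreover have "\<not> inv_pair (last M) (hd z')" using MS hz' by (auto simp: inv_pair_def)
    ultimately have "reduced (M @ z')" by (simp add: reduced_append)
    then show ?thesis by (simp add: mult_FG red_reduced del: red_Cons)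
  qed
  have pMz: "pfx (M \<otimes>\<^bsub>F3\<^esub> z') = 0"
  proof -
    obtain h t where "M = h # t" using MS by (cases M) auto
    then show ?thesis using Mz MS by (simp add: pfx_Cons_other)
  qed
  have Mc: "M \<otimes>\<^bsub>F3\<^esub> z' \<in> carrier F3" using Meq[symmetric] rc gjc z'c by simp
  have "G \<otimes>\<^bsub>F3\<^esub> gen j [^]\<^bsub>F3\<^esub> e \<otimes>\<^bsub>F3\<^esub> inv\<^bsub>F3\<^esub> G \<otimes>\<^bsub>F3\<^esub> z = x1 [^]\<^bsub>F3\<^esub> q \<otimes>\<^bsub>F3\<^esub> (M \<otimes>\<^bsub>F3\<^esub> z')"
    unfolding Meq[symmetric] z'_def Gr using x1c rc gjc z
    by (simp add: F3.m_assoc F3.inv_mult_group F3.int_pow_neg)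
  then show ?thesis using pfx_pow1[OF Mc, of q] pMz q_def x1_def by simp
qed


declare one_FG[simp del]

definition Gof :: "letter list \<Rightarrow> letter list \<Rightarrow> nat \<Rightarrow> letter list" where
  "Gof G2 G3 a = (if a = 1 then G2 else G3)"
definition xof :: "nat \<Rightarrow> nat" where "xof a = (if a = 1 then 2 else 3)"
definition Qm :: "letter list \<Rightarrow> letter list \<Rightarrow> nat \<Rightarrow> letter list" where
  "Qm G2 G3 a = Gof G2 G3 a \<otimes>\<^bsub>F3\<^esub> gen (xof a) \<otimes>\<^bsub>F3\<^esub> inv\<^bsub>F3\<^esub> (Gof G2 G3 a)"

lemma F3_inv_cancel[simp]:
  "x \<in> carrier F3 \<Longrightarrow> y \<in> carrier F3 \<Longrightarrow> inv\<^bsub>F3\<^esub> x \<otimes>\<^bsub>F3\<^esub> (x \<otimes>\<^bsub>F3\<^esub> y) = y"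
  "x \<in> carrier F3 \<Longrightarrow> y \<in> carrier F3 \<Longrightarrow> x \<otimes>\<^bsub>F3\<^esub> (inv\<^bsub>F3\<^esub> x \<otimes>\<^bsub>F3\<^esub> y) = y"
  by (simp_all add: F3.m_assoc[symmetric])

lemma xof_in: "xof a \<in> {2,3}" by (simp add: xof_def)
lemma gen_xof: "gen (xof a) \<in> carrier F3" by (rule gen_carrier) (auto simp: xof_def)
lemma Gof_carrier: "G2 \<in> carrier F3 \<Longrightarrow> G3 \<in> carrier F3 \<Longrightarrow> Gof G2 G3 a \<in> carrier F3"
  by (simp add: Gof_def)
lemma Qm_carrier: "G2 \<in> carrier F3 \<Longrightarrow> G3 \<in> carrier F3 \<Longrightarrow> Qm G2 G3 a \<in> carrier F3"
  by (simp add: Qm_def Gof_carrier gen_xof)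

lemma conj_nat_pow:
  assumes "g \<in> carrier F3" "y \<in> carrier F3"
  shows "(g \<otimes>\<^bsub>F3\<^esub> y \<otimes>\<^bsub>F3\<^esub> inv\<^bsub>F3\<^esub> g) [^]\<^bsub>F3\<^esub> (n::nat) = g \<otimes>\<^bsub>F3\<^esub> y [^]\<^bsub>F3\<^esub> n \<otimes>\<^bsub>F3\<^esub> inv\<^bsub>F3\<^esub> g"
proof (induction n)
  case 0 then show ?case using assms by simp
next
  case (Suc n)
  have "(g \<otimes>\<^bsub>F3\<^esub> y \<otimes>\<^bsub>F3\<^esub> inv\<^bsub>F3\<^esub> g) [^]\<^bsub>F3\<^esub> Suc n
        = (g \<otimes>\<^bsub>F3\<^esub> y [^]\<^bsub>F3\<^esub> n \<otimes>\<^bsub>F3\<^esub> inv\<^bsub>F3\<^esub> g) \<otimes>\<^bsub>F3\<^esub> (g \<otimes>\<^bsub>F3\<^esub> y \<otimes>\<^bsub>F3\<^esub> inv\<^bsub>F3\<^esub> g)"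
    using Suc by simp
  also have "\<dots> = g \<otimes>\<^bsub>F3\<^esub> (y [^]\<^bsub>F3\<^esub> n \<otimes>\<^bsub>F3\<^esub> y) \<otimes>\<^bsub>F3\<^esub> inv\<^bsub>F3\<^esub> g"
    using assms by (simp add: F3.m_assoc)
  finally show ?case by simp
qed

lemma ev_replicate:
  assumes "f (snd l) \<in> carrier F3"
  shows "ev F3 f (replicate n l) = (ltr F3 f l) [^]\<^bsub>F3\<^esub> n"
proof (induction n)
  case 0 then show ?case by simp
next
  case (Suc n)
  have lc: "ltr F3 f l \<in> carrier F3" using assms by (rule F3.ltr_closed)
  have "ltr F3 f l \<otimes>\<^bsub>F3\<^esub> ltr F3 f l [^]\<^bsub>F3\<^esub> n = ltr F3 f l [^]\<^bsub>F3\<^esub> Suc n"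
    by (rule F3.nat_pow_Suc2[symmetric, OF lc])
  then show ?case using Suc by simp
qed

lemma ev_block:
  assumes G2: "G2 \<in> carrier F3" and G3: "G3 \<in> carrier F3" and n: "n > 0"
  shows "\<exists>e::int. e \<noteq> 0 \<and> ev F3 (Qm G2 G3) (replicate n l)
           = Gof G2 G3 (snd l) \<otimes>\<^bsub>F3\<^esub> gen (xof (snd l)) [^]\<^bsub>F3\<^esub> e \<otimes>\<^bsub>F3\<^esub> inv\<^bsub>F3\<^esub> (Gof G2 G3 (snd l))"
proof -
  let ?G = "Gof G2 G3 (snd l)" and ?X = "gen (xof (snd l))"
  have Gc: "?G \<in> carrier F3" using G2 G3 by (rule Gof_carrier)
  have Xc: "?X \<in> carrier F3" by (rule gen_xof)
  have ev: "ev F3 (Qm G2 G3) (replicate n l) = (ltr F3 (Qm G2 G3) l) [^]\<^bsub>F3\<^esub> n"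
    by (rule ev_replicate) (simp add: Qm_carrier G2 G3)
  show ?thesis
  proof (cases "fst l")
    case True
    have "ltr F3 (Qm G2 G3) l = ?G \<otimes>\<^bsub>F3\<^esub> inv\<^bsub>F3\<^esub> ?X \<otimes>\<^bsub>F3\<^esub> inv\<^bsub>F3\<^esub> ?G"
      using True Gc Xc by (simp add: ltr_def Qm_def F3.inv_mult_group F3.m_assoc)
    then have "ev F3 (Qm G2 G3) (replicate n l) = ?G \<otimes>\<^bsub>F3\<^esub> (inv\<^bsub>F3\<^esub> ?X) [^]\<^bsub>F3\<^esub> n \<otimes>\<^bsub>F3\<^esub> inv\<^bsub>F3\<^esub> ?G"
      using ev conj_nat_pow[OF Gc F3.inv_closed[OF Xc]] by simp
    also have "(inv\<^bsub>F3\<^esub> ?X) [^]\<^bsub>F3\<^esub> n = ?X [^]\<^bsub>F3\<^esub> (- int n)"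
      using Xc by (simp add: F3.int_pow_neg_int F3.nat_pow_inv)
    finally show ?thesis using n by (intro exI[of _ "- int n"]) simp
  next
    case False
    have "ltr F3 (Qm G2 G3) l = ?G \<otimes>\<^bsub>F3\<^esub> ?X \<otimes>\<^bsub>F3\<^esub> inv\<^bsub>F3\<^esub> ?G"
      using False by (simp add: ltr_def Qm_def)
    then have "ev F3 (Qm G2 G3) (replicate n l) = ?G \<otimes>\<^bsub>F3\<^esub> ?X [^]\<^bsub>F3\<^esub> n \<otimes>\<^bsub>F3\<^esub> inv\<^bsub>F3\<^esub> ?G"
      using ev conj_nat_pow[OF Gc Xc] by simp
    also have "?X [^]\<^bsub>F3\<^esub> n = ?X [^]\<^bsub>F3\<^esub> (int n)" by (simp add: int_pow_int)
    finally show ?thesis using n by (intro exI[of _ "int n"]) simp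
  qed
qed

lemma takeWhile_eq_replicate: "takeWhile (\<lambda>x. x = c) v = replicate (length (takeWhile (\<lambda>x. x = c) v)) c"
  by (induction v) auto

lemma syllable:
  assumes G2: "G2 \<in> carrier F3" and G3: "G3 \<in> carrier F3" and ne: "pfx G2 \<noteq> pfx G3"
  shows "reduced v \<Longrightarrow> v \<noteq> [] \<Longrightarrow> \<forall>l\<in>set v. snd l \<in> {1,3} \<Longrightarrow> z \<in> carrier F3 \<Longrightarrow>
    (pfx z \<noteq> pfx (Gof G2 G3 (snd (last v))) \<or>
      (\<exists>m::int. z = Gof G2 G3 (snd (last v)) \<otimes>\<^bsub>F3\<^esub> gen (xof (snd (last v))) [^]\<^bsub>F3\<^esub> m)) \<Longrightarrow>
    pfx (ev F3 (Qm G2 G3) v \<otimes>\<^bsub>F3\<^esub> z) = pfx (Gof G2 G3 (snd (hd v)))"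
proof (induction "length v" arbitrary: v z rule: less_induct)
  case less
  note rv = less.prems(1) and vne = less.prems(2) and vl = less.prems(3) and zc = less.prems(4)
    and zcond = less.prems(5)
  define l where "l = hd v"
  define n where "n = length (takeWhile (\<lambda>x. x = l) v)"
  define rest where "rest = dropWhile (\<lambda>x. x = l) v"
  have vsplit: "v = replicate n l @ rest"
    unfolding n_def rest_def using takeWhile_eq_replicate[of l v] takeWhile_dropWhile_id[of "\<lambda>x. x = l" v]
    by simp
  have n: "n > 0" unfolding n_def l_def using vne by (cases v) auto
  let ?G = "Gof G2 G3 (snd l)" and ?X = "gen (xof (snd l))"
  have Gc: "?G \<in> carrier F3" using G2 G3 by (rule Gof_carrier)
  have Xc: "?X \<in> carrier F3" by (rule gen_xof)
  have Qc: "\<forall>l\<in>set w. Qm G2 G3 (snd l) \<in> carrier F3" for w :: "letter list" using G2 G3 by (simp add: Qm_carrier)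
  from ev_block[OF G2 G3 n, of l] obtain e :: int where eP: "e \<noteq> 0 \<and>
     ev F3 (Qm G2 G3) (replicate n l) = ?G \<otimes>\<^bsub>F3\<^esub> ?X [^]\<^bsub>F3\<^esub> e \<otimes>\<^bsub>F3\<^esub> inv\<^bsub>F3\<^esub> ?G" ..
  note e = conjunct1[OF eP] and eb = conjunct2[OF eP]
  have "ev F3 (Qm G2 G3) v = ev F3 (Qm G2 G3) (replicate n l) \<otimes>\<^bsub>F3\<^esub> ev F3 (Qm G2 G3) rest"
    by (subst vsplit) (rule F3.ev_append[OF Qc Qc])
  then have evv: "ev F3 (Qm G2 G3) v = (?G \<otimes>\<^bsub>F3\<^esub> ?X [^]\<^bsub>F3\<^esub> e \<otimes>\<^bsub>F3\<^esub> inv\<^bsub>F3\<^esub> ?G) \<otimes>\<^bsub>F3\<^esub> ev F3 (Qm G2 G3) rest"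
    by (simp only: eb)
  have evrc: "ev F3 (Qm G2 G3) rest \<in> carrier F3" by (rule F3.ev_closed[OF Qc])
  have xin: "xof (snd l) \<in> {2,3}" by (rule xof_in)
  show ?case
  proof (cases "rest = []")
    case True
    then have lastv: "snd (last v) = snd l" using vsplit n by simp
    have hv: "hd v = l" by (simp add: l_def)
    have ev1: "ev F3 (Qm G2 G3) v \<otimes>\<^bsub>F3\<^esub> z = ?G \<otimes>\<^bsub>F3\<^esub> ?X [^]\<^bsub>F3\<^esub> e \<otimes>\<^bsub>F3\<^esub> inv\<^bsub>F3\<^esub> ?G \<otimes>\<^bsub>F3\<^esub> z"
      using evv True Gc Xc zc by simp
    show ?thesis
    proof (cases "pfx z \<noteq> pfx ?G")
      case True
      then show ?thesis using ev1 F1[OF Gc xin e zc] hv by simp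
    next
      case False
      then obtain m :: int where m: "z = ?G \<otimes>\<^bsub>F3\<^esub> ?X [^]\<^bsub>F3\<^esub> m" using zcond lastv by auto
      have "ev F3 (Qm G2 G3) v \<otimes>\<^bsub>F3\<^esub> z = ?G \<otimes>\<^bsub>F3\<^esub> (?X [^]\<^bsub>F3\<^esub> e \<otimes>\<^bsub>F3\<^esub> ?X [^]\<^bsub>F3\<^esub> m)"
        using ev1 m Gc Xc by (simp add: F3.m_assoc)
      also have "\<dots> = ?G \<otimes>\<^bsub>F3\<^esub> ?X [^]\<^bsub>F3\<^esub> (e + m)" using Xc by (simp add: F3.int_pow_mult)
      finally show ?thesis using pfx_mult_pow_other[OF xin Gc] hv by simp
    qed
  next
    case False
    have rv': "reduced (replicate n l @ rest)" using rv vsplit by simp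
    have lrep: "last (replicate n l) = l" using n by simp
    have rr: "reduced rest" and bd: "\<not> inv_pair l (hd rest)"
      using rv' False n lrep unfolding reduced_append by auto
    have hne: "hd rest \<noteq> l" using False hd_dropWhile[of "\<lambda>x. x = l" v] unfolding rest_def by simp
    have sne: "snd (hd rest) \<noteq> snd l" using same_snd_cases[of l "hd rest"] bd hne by auto
    have lastr: "last rest = last v" using vsplit False by simp
    have lr: "length rest < length v" using vsplit n by simp
    have vlr: "\<forall>l\<in>set rest. snd l \<in> {1,3}" using vl vsplit by auto
    have IH: "pfx (ev F3 (Qm G2 G3) rest \<otimes>\<^bsub>F3\<^esub> z) = pfx (Gof G2 G3 (snd (hd rest)))"
      using less.hyps[OF lr rr False vlr zc] zcond lastr by simp
    have s1: "snd l \<in> {1,3}" using vl vne by (simp add: l_def)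
    have s2: "snd (hd rest) \<in> {1,3}" using vlr False by simp
    have pne: "pfx (Gof G2 G3 (snd (hd rest))) \<noteq> pfx ?G"
      using s1 s2 sne ne by (auto simp: Gof_def)
    have rzc: "ev F3 (Qm G2 G3) rest \<otimes>\<^bsub>F3\<^esub> z \<in> carrier F3" using evrc zc by simp
    have "ev F3 (Qm G2 G3) v \<otimes>\<^bsub>F3\<^esub> z = ?G \<otimes>\<^bsub>F3\<^esub> ?X [^]\<^bsub>F3\<^esub> e \<otimes>\<^bsub>F3\<^esub> inv\<^bsub>F3\<^esub> ?G \<otimes>\<^bsub>F3\<^esub> (ev F3 (Qm G2 G3) rest \<otimes>\<^bsub>F3\<^esub> z)"
      using evv Gc Xc zc evrc by (simp add: F3.m_assoc)
    then show ?thesis using F1[OF Gc xin e rzc] IH pne by (simp add: l_def)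
  qed
qed


declare one_FG[simp del]

definition psi :: "letter list \<Rightarrow> letter list \<Rightarrow> letter list" where
  "psi t = (\<lambda>w\<in>carrier F3. t \<otimes>\<^bsub>F3\<^esub> w \<otimes>\<^bsub>F3\<^esub> inv\<^bsub>F3\<^esub> t)"

lemma psi_apply: "w \<in> carrier F3 \<Longrightarrow> psi t w = t \<otimes>\<^bsub>F3\<^esub> w \<otimes>\<^bsub>F3\<^esub> inv\<^bsub>F3\<^esub> t"
  by (simp add: psi_def)

lemma psi_hom_F3: "t \<in> carrier F3 \<Longrightarrow> psi t \<in> hom F3 F3"
  by (rule homI) (auto simp: psi_def F3.m_assoc)

lemma psi_Bij: "t \<in> carrier F3 \<Longrightarrow> psi t \<in> Bij (carrier F3)"
  using F3.conjugation_is_hom unfolding psi_def hom_def BijGroup_def by auto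

lemma psi_auto: "t \<in> carrier F3 \<Longrightarrow> psi t \<in> auto F3"
  by (simp add: auto_def psi_hom_F3 psi_Bij)

lemma psi_hom: "psi \<in> hom F3 AutF3"
proof (rule homI)
  fix t assume "t \<in> carrier F3" then show "psi t \<in> carrier AutF3" by (simp add: carrier_Aut psi_auto)
next
  fix s t assume s: "s \<in> carrier F3" and t: "t \<in> carrier F3"
  have "psi (s \<otimes>\<^bsub>F3\<^esub> t) = psi s \<otimes>\<^bsub>BijGroup (carrier F3)\<^esub> psi t"
    using F3.conjugation_is_hom s t unfolding psi_def hom_def by auto
  then show "psi (s \<otimes>\<^bsub>F3\<^esub> t) = psi s \<otimes>\<^bsub>AutF3\<^esub> psi t" by (simp add: AutoGroup_def)
qed

interpretation psi_gh: group_hom F3 AutF3 psi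
  by (simp add: group_hom_def group_hom_axioms_def group_F3 group_Aut psi_hom)

lemma auto_gh: "\<sigma> \<in> auto F3 \<Longrightarrow> group_hom F3 F3 \<sigma>"
  by (simp add: group_hom_def group_hom_axioms_def group_F3 auto_hom)

lemma psi_conj:
  assumes \<sigma>: "\<sigma> \<in> auto F3" and t: "t \<in> carrier F3"
  shows "\<sigma> \<otimes>\<^bsub>AutF3\<^esub> psi t \<otimes>\<^bsub>AutF3\<^esub> inv\<^bsub>AutF3\<^esub> \<sigma> = psi (\<sigma> t)"
proof -
  have \<sigma>i: "inv\<^bsub>AutF3\<^esub> \<sigma> \<in> auto F3" using \<sigma> by (rule Aut_inv_closed)
  have st: "\<sigma> t \<in> carrier F3" using \<sigma> t by (rule auto_closed)
  have pa: "psi t \<in> auto F3" using t by (rule psi_auto)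
  have c1: "\<sigma> \<otimes>\<^bsub>AutF3\<^esub> psi t \<in> auto F3" using \<sigma> pa Aut.m_closed by (simp add: carrier_Aut)
  have l: "\<sigma> \<otimes>\<^bsub>AutF3\<^esub> psi t \<otimes>\<^bsub>AutF3\<^esub> inv\<^bsub>AutF3\<^esub> \<sigma> \<in> auto F3" using c1 \<sigma>i Aut.m_closed by (simp add: carrier_Aut)
  interpret s: group_hom F3 F3 \<sigma> by (rule auto_gh[OF \<sigma>])
  show ?thesis
  proof (rule extensionalityI[OF auto_ext[OF l] auto_ext[OF psi_auto[OF st]]])
    fix w assume w: "w \<in> carrier F3"
    have iw: "(inv\<^bsub>AutF3\<^esub> \<sigma>) w \<in> carrier F3" using \<sigma>i w by (rule auto_closed)
    have "(\<sigma> \<otimes>\<^bsub>AutF3\<^esub> psi t \<otimes>\<^bsub>AutF3\<^esub> inv\<^bsub>AutF3\<^esub> \<sigma>) w = \<sigma> (psi t ((inv\<^bsub>AutF3\<^esub> \<sigma>) w))"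
      using c1 \<sigma>i w \<sigma> pa iw by (simp add: Aut_mult_apply)
    also have "\<dots> = \<sigma> t \<otimes>\<^bsub>F3\<^esub> \<sigma> ((inv\<^bsub>AutF3\<^esub> \<sigma>) w) \<otimes>\<^bsub>F3\<^esub> inv\<^bsub>F3\<^esub> (\<sigma> t)"
      using iw t by (simp add: psi_apply)
    also have "\<dots> = psi (\<sigma> t) w" using Aut_inv_apply1[OF \<sigma> w] w by (simp add: psi_apply)
    finally show "(\<sigma> \<otimes>\<^bsub>AutF3\<^esub> psi t \<otimes>\<^bsub>AutF3\<^esub> inv\<^bsub>AutF3\<^esub> \<sigma>) w = psi (\<sigma> t) w" .
  qed
qed

lemma comm_of_psi_fix:
  assumes t: "t \<in> carrier F3" and x: "x \<in> carrier F3" and e: "psi t x = x"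
  shows "t \<otimes>\<^bsub>F3\<^esub> x = x \<otimes>\<^bsub>F3\<^esub> t"
proof -
  have "t \<otimes>\<^bsub>F3\<^esub> x \<otimes>\<^bsub>F3\<^esub> inv\<^bsub>F3\<^esub> t = x" using e x by (simp add: psi_apply)
  then have "t \<otimes>\<^bsub>F3\<^esub> x \<otimes>\<^bsub>F3\<^esub> inv\<^bsub>F3\<^esub> t \<otimes>\<^bsub>F3\<^esub> t = x \<otimes>\<^bsub>F3\<^esub> t" by simp
  then show ?thesis using t x by (simp add: F3.m_assoc)
qed

lemma pfx_one: "pfx \<one>\<^bsub>F3\<^esub> = 0" by (simp add: one_FG)

lemma psi_inj_one:
  assumes t: "t \<in> carrier F3" and e: "psi t = \<one>\<^bsub>AutF3\<^esub>"
  shows "t = \<one>\<^bsub>F3\<^esub>"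
proof -
  have "psi t (gen 1) = gen 1" using e by (simp add: Aut_one)
  then obtain m :: int where m: "t = gen 1 [^]\<^bsub>F3\<^esub> m"
    using centralizer[OF t, of 1] comm_of_psi_fix[OF t] by fastforce
  have "psi t (gen 2) = gen 2" using e by (simp add: Aut_one)
  then obtain k :: int where k: "t = gen 2 [^]\<^bsub>F3\<^esub> k"
    using centralizer[OF t, of 2] comm_of_psi_fix[OF t] by fastforce
  have "pfx t = m" using pfx_pow1[of "\<one>\<^bsub>F3\<^esub>" m] m by (simp add: pfx_one)
  moreover have "pfx t = 0" using pfx_mult_pow_other[of 2 "\<one>\<^bsub>F3\<^esub>" k] k by (simp add: pfx_one)
  ultimately show ?thesis using m by simp
qed

lemma psi_inj: "inj_on psi (carrier F3)"
proof (rule inj_onI)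
  fix s t assume s: "s \<in> carrier F3" and t: "t \<in> carrier F3" and e: "psi s = psi t"
  have "psi (s \<otimes>\<^bsub>F3\<^esub> inv\<^bsub>F3\<^esub> t) = psi s \<otimes>\<^bsub>AutF3\<^esub> inv\<^bsub>AutF3\<^esub> (psi t)"
    using s t by simp
  also have "\<dots> = \<one>\<^bsub>AutF3\<^esub>" using e t psi_gh.hom_closed by simp
  finally have "s \<otimes>\<^bsub>F3\<^esub> inv\<^bsub>F3\<^esub> t = \<one>\<^bsub>F3\<^esub>" using psi_inj_one s t by simp
  then have "inv\<^bsub>F3\<^esub> (inv\<^bsub>F3\<^esub> t) = s" using s t by (intro F3.inv_equality) auto
  then show "s = t" using t by simp
qed

lemma nu_psi: "i \<in> {1..3} \<Longrightarrow> nu i = psi (inv\<^bsub>F3\<^esub> (gen i))"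
proof -
  assume i: "i \<in> {1..3}"
  have gi: "gen i \<in> carrier F3" using i by (rule gen_carrier)
  show ?thesis
  proof (rule ext)
    fix w show "nu i w = psi (inv\<^bsub>F3\<^esub> (gen i)) w"
    proof (cases "w \<in> carrier F3")
      case True
      have "psi (inv\<^bsub>F3\<^esub> (gen i)) w = inv\<^bsub>F3\<^esub> (gen i) \<otimes>\<^bsub>F3\<^esub> w \<otimes>\<^bsub>F3\<^esub> gen i"
        by (simp only: psi_apply[OF True] F3.inv_inv[OF gi])
      also have "\<dots> = red (red (winv (gen i) @ w) @ gen i)"
        using gi by (simp add: inv_FG mult_FG del: red_Cons)
      finally have "psi (inv\<^bsub>F3\<^esub> (gen i)) w = red (red (winv (gen i) @ w) @ gen i)" .
      then show ?thesis using True by (simp add: nu_def del: red_Cons)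
    next
      case False then show ?thesis by (simp add: nu_def psi_def)
    qed
  qed
qed

lemma nu_auto: "i \<in> {1..3} \<Longrightarrow> nu i \<in> auto F3"
  using nu_psi psi_auto gen_carrier by (metis F3.inv_closed)


declare one_FG[simp del]

definition XI :: "(letter list \<Rightarrow> letter list) set" where
  "XI = {xi i j | i j. i \<in> {1..3} \<and> j \<in> {1..3} \<and> i \<noteq> j}"
definition NU :: "(letter list \<Rightarrow> letter list) set" where
  "NU = {nu 1, nu 2, nu 3}"

lemma PSigma3_alt: "PSigma3 = subgroup_generated AutF3 XI" by (simp add: PSigma3_def XI_def)
lemma XI_auto: "XI \<subseteq> auto F3" using xi_pair by (auto simp: XI_def)
lemma XI_carrier: "XI \<subseteq> carrier AutF3" using XI_auto by (simp add: carrier_Aut)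

lemma carrier_PSigma3: "carrier PSigma3 = generate AutF3 XI"
  using XI_carrier by (simp add: PSigma3_alt carrier_subgroup_generated Int_absorb1)

lemma PSigma3_rec: "PSigma3 = AutF3\<lparr>carrier := carrier PSigma3\<rparr>"
  by (simp add: PSigma3_alt subgroup_generated_def carrier_subgroup_generated)

lemma group_PSigma3: "group PSigma3" by (simp add: PSigma3_alt)

interpretation P: group PSigma3 by (rule group_PSigma3)

lemma subgroup_PSigma3: "subgroup (carrier PSigma3) AutF3"
  unfolding carrier_PSigma3 by (rule Aut.generate_is_subgroup[OF XI_carrier])

lemma PSigma3_auto: "x \<in> carrier PSigma3 \<Longrightarrow> x \<in> auto F3"
  using subgroup.subset[OF subgroup_PSigma3] by (auto simp: carrier_Aut)

lemma mult_PSigma3[simp]: "x \<otimes>\<^bsub>PSigma3\<^esub> y = x \<otimes>\<^bsub>AutF3\<^esub> y" by (simp add: PSigma3_alt)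
lemma one_PSigma3[simp]: "\<one>\<^bsub>PSigma3\<^esub> = \<one>\<^bsub>AutF3\<^esub>" by (simp add: PSigma3_alt)
lemma inv_PSigma3: "x \<in> carrier PSigma3 \<Longrightarrow> inv\<^bsub>PSigma3\<^esub> x = inv\<^bsub>AutF3\<^esub> x"
  unfolding PSigma3_alt by (rule Aut.inv_subgroup_generated) (simp add: PSigma3_alt[symmetric])

lemma xi_in_P: "i \<in> {1..3} \<Longrightarrow> j \<in> {1..3} \<Longrightarrow> i \<noteq> j \<Longrightarrow> xi i j \<in> carrier PSigma3"
  unfolding carrier_PSigma3 by (rule generate.incl) (auto simp: XI_def)

lemma xi_auto: "i \<in> {1..3} \<Longrightarrow> j \<in> {1..3} \<Longrightarrow> i \<noteq> j \<Longrightarrow> xi i j \<in> auto F3"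
  using xi_pair by auto

lemma carrier_lists:
  "[(True, 1), (False, 2), (False, 1)] \<in> carrier F3"
  "[(True, 1), (False, 3), (False, 1)] \<in> carrier F3"
  "[(True, 2), (False, 1), (False, 2)] \<in> carrier F3"
  "[(True, 2), (False, 3), (False, 2)] \<in> carrier F3"
  "[(True, 3), (False, 1), (False, 3)] \<in> carrier F3"
  "[(True, 3), (False, 2), (False, 3)] \<in> carrier F3"
  "[(False, 1)] \<in> carrier F3" "[(False, 2)] \<in> carrier F3" "[(False, 3)] \<in> carrier F3"
  by (auto simp: carrier_FG inv_pair_def)

lemma nu_gen: "a \<in> {1..3} \<Longrightarrow> nu i (gen a) = red ([(True, i)] @ [(False, a)] @ [(False, i)])"
proof -
  assume "a \<in> {1..3}"
  then have ga: "gen a \<in> carrier F3" by (rule gen_carrier)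
  then show ?thesis unfolding nu_def by (simp add: gen_def winv_def del: red_Cons)
qed

lemma prod_check:
  assumes f: "f \<in> auto F3" and g: "g \<in> auto F3" and h: "h \<in> auto F3"
    and e1: "h (gen 1) = f (g (gen 1))" and e2: "h (gen 2) = f (g (gen 2))" and e3: "h (gen 3) = f (g (gen 3))"
  shows "h = f \<otimes>\<^bsub>AutF3\<^esub> g"
proof (rule auto_eq[OF h])
  show "f \<otimes>\<^bsub>AutF3\<^esub> g \<in> auto F3" using Aut.m_closed f g by (simp add: carrier_Aut)
  show "\<forall>a\<in>{1..3}. h (gen a) = (f \<otimes>\<^bsub>AutF3\<^esub> g) (gen a)"
  proof
    fix a :: nat assume "a \<in> {1..3}"
    then have "a = 1 \<or> a = 2 \<or> a = 3" by auto
    then show "h (gen a) = (f \<otimes>\<^bsub>AutF3\<^esub> g) (gen a)"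
      using e1 e2 e3 f g by (auto simp: Aut_mult_apply)
  qed
qed

lemma xi_apply3: "[x, y, z] \<in> carrier F3 \<Longrightarrow> xi i j [x, y, z] = subst (fx i j) [x, y, z]"
  by (rule xi_apply)
lemma xi_apply1: "[x] \<in> carrier F3 \<Longrightarrow> xi i j [x] = subst (fx i j) [x]"
  by (rule xi_apply)

lemmas evalsimps = nu_gen xi_gen fx_def xi_apply3 xi_apply1 carrier_FG subst_def winv_def red1_def inv_pair_def

lemma nu_prod:
  "nu 1 = xi 3 1 \<otimes>\<^bsub>AutF3\<^esub> xi 2 1"
  "nu 2 = xi 3 2 \<otimes>\<^bsub>AutF3\<^esub> xi 1 2"
  "nu 3 = xi 2 3 \<otimes>\<^bsub>AutF3\<^esub> xi 1 3"
  by (rule prod_check; simp add: xi_auto nu_auto evalsimps)+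


lemma nu_in_P: "nu 1 \<in> carrier PSigma3" "nu 2 \<in> carrier PSigma3" "nu 3 \<in> carrier PSigma3"
  by (simp_all only: nu_prod mult_PSigma3[symmetric]) (rule P.m_closed; rule xi_in_P; simp)+

lemma NU_sub: "NU \<subseteq> carrier PSigma3" using nu_in_P by (auto simp: NU_def)

lemma V3_alt: "V3 = generate PSigma3 NU" by (simp add: V3_def NU_def)

lemma V3_Aut: "V3 = generate AutF3 NU"
proof -
  have "generate (AutF3\<lparr>carrier := carrier PSigma3\<rparr>) NU = generate AutF3 NU"
    by (rule Aut.generate_consistent[OF NU_sub subgroup_PSigma3])
  then show ?thesis using PSigma3_rec V3_alt by metis
qed

lemma nu_psi': "a \<in> {1..3} \<Longrightarrow> psi (gen a) = inv\<^bsub>AutF3\<^esub> (nu a)"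
proof -
  assume a: "a \<in> {1..3}"
  then have ga: "gen a \<in> carrier F3" by (rule gen_carrier)
  have "nu a = inv\<^bsub>AutF3\<^esub> (psi (gen a))" using nu_psi[OF a] ga by simp
  then show ?thesis using ga psi_gh.hom_closed by simp
qed

lemma V3_psi: "V3 = psi ` carrier F3"
proof
  have ni: "nu a \<in> psi ` carrier F3" if "a \<in> {1..3}" for a
    using nu_psi[OF that] F3.inv_closed[OF gen_carrier[OF that]] by (metis image_eqI)
  have "NU \<subseteq> psi ` carrier F3"
    using ni[of 1] ni[of 2] ni[of 3] by (auto simp: NU_def)
  then show "V3 \<subseteq> psi ` carrier F3"
    unfolding V3_Aut by (rule Aut.generate_subgroup_incl[OF _ psi_gh.img_is_subgroup])
next
  show "psi ` carrier F3 \<subseteq> V3"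
  proof
    fix x assume "x \<in> psi ` carrier F3"
    then obtain t where t: "t \<in> carrier F3" and x: "x = psi t" by auto
    have "t \<in> generate F3 (gen ` {1..3})" using t carrier_generate[of 3] by simp
    then have "psi t \<in> generate AutF3 NU"
    proof (induction rule: generate.induct)
      case one then show ?case using generate.one[of AutF3 NU] by simp
    next
      case (incl h)
      then obtain a where a: "a \<in> {1..3}" and h: "h = gen a" by auto
      have "a = 1 \<or> a = 2 \<or> a = 3" using a by auto
      then have "nu a \<in> NU" by (auto simp: NU_def)
      then show ?case using generate.inv[of "nu a" NU AutF3] nu_psi'[OF a] h by simp
    next
      case (inv h)
      then obtain a where a: "a \<in> {1..3}" and h: "h = gen a" by auto
      have "a = 1 \<or> a = 2 \<or> a = 3" using a by auto
      then have "nu a \<in> NU" by (auto simp: NU_def)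
      then show ?case using generate.incl[of "nu a" NU AutF3] nu_psi[OF a] h by simp
    next
      case (eng h1 h2)
      have "h1 \<in> carrier F3" "h2 \<in> carrier F3"
        using eng.hyps(1,2) carrier_generate[of 3] by auto
      then show ?case using generate.eng[OF eng.IH] by simp
    qed
    then show "x \<in> V3" using x V3_Aut by simp
  qed
qed

lemma carrier_V3grp: "carrier V3grp = V3"
  using NU_sub by (simp add: V3grp_def carrier_subgroup_generated V3_alt NU_def Int_absorb1)

lemma mult_V3grp[simp]: "x \<otimes>\<^bsub>V3grp\<^esub> y = x \<otimes>\<^bsub>AutF3\<^esub> y"
  by (simp add: V3grp_def)

lemma psi_iso: "psi \<in> iso F3 V3grp"
proof -
  have "psi \<in> hom F3 V3grp"
    by (rule homI) (auto simp: carrier_V3grp V3_psi)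
  moreover have "bij_betw psi (carrier F3) (carrier V3grp)"
    using psi_inj by (simp add: bij_betw_def carrier_V3grp V3_psi)
  ultimately show ?thesis by (simp add: iso_def)
qed

lemma V3grp_iso: "V3grp \<cong> F3"
  using psi_iso F3.iso_sym by (auto simp: is_iso_def)

lemma V3_sub: "V3 \<subseteq> carrier PSigma3"
  unfolding V3_alt by (rule P.generate_incl[OF NU_sub])

lemma V3_normal: "V3 \<lhd> PSigma3"
proof (rule P.normal_invI)
  show "subgroup V3 PSigma3" unfolding V3_alt by (rule P.generate_is_subgroup[OF NU_sub])
next
  fix x h assume x: "x \<in> carrier PSigma3" and h: "h \<in> V3"
  then obtain t where t: "t \<in> carrier F3" and ht: "h = psi t" using V3_psi by auto
  have xa: "x \<in> auto F3" using x by (rule PSigma3_auto)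
  have "x \<otimes>\<^bsub>PSigma3\<^esub> h \<otimes>\<^bsub>PSigma3\<^esub> inv\<^bsub>PSigma3\<^esub> x = psi (x t)"
    using psi_conj[OF xa t] x ht by (simp add: inv_PSigma3)
  then show "x \<otimes>\<^bsub>PSigma3\<^esub> h \<otimes>\<^bsub>PSigma3\<^esub> inv\<^bsub>PSigma3\<^esub> x \<in> V3"
    using auto_closed[OF xa t] V3_psi by (metis image_eqI)
qed


declare one_FG[simp del]

definition state :: "(letter list \<Rightarrow> letter list) \<Rightarrow> (nat \<Rightarrow> letter list) \<Rightarrow> bool" where
  "state \<omega> g \<longleftrightarrow> (\<forall>a\<in>{1..3}. g a \<in> carrier F3 \<and> \<omega> (gen a) = g a \<otimes>\<^bsub>F3\<^esub> gen a \<otimes>\<^bsub>F3\<^esub> inv\<^bsub>F3\<^esub> (g a))"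

definition Pc :: "(nat \<Rightarrow> letter list) \<Rightarrow> nat \<Rightarrow> letter list" where
  "Pc g a = g a \<otimes>\<^bsub>F3\<^esub> gen a \<otimes>\<^bsub>F3\<^esub> inv\<^bsub>F3\<^esub> (g a)"

definition delta :: "(nat \<Rightarrow> letter list) \<Rightarrow> int" where
  "delta g = pfx (inv\<^bsub>F3\<^esub> (g 1) \<otimes>\<^bsub>F3\<^esub> g 2) - pfx (inv\<^bsub>F3\<^esub> (g 1) \<otimes>\<^bsub>F3\<^esub> g 3)"

lemma state_carrier: "state \<omega> g \<Longrightarrow> a \<in> {1..3} \<Longrightarrow> g a \<in> carrier F3"
  by (simp add: state_def)
lemma state_val: "state \<omega> g \<Longrightarrow> a \<in> {1..3} \<Longrightarrow> \<omega> (gen a) = Pc g a"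
  by (simp add: state_def Pc_def)
lemma Pc_carrier: "g a \<in> carrier F3 \<Longrightarrow> a \<in> {1..3} \<Longrightarrow> Pc g a \<in> carrier F3"
  by (simp add: Pc_def gen_carrier)

lemma fx_group:
  assumes "i \<in> {1..3}" "j \<in> {1..3}" "i \<noteq> j"
  shows "[(True, j), (False, i), (False, j)] = inv\<^bsub>F3\<^esub> (gen j) \<otimes>\<^bsub>F3\<^esub> gen i \<otimes>\<^bsub>F3\<^esub> gen j"
    and "[(False, j), (False, i), (True, j)] = gen j \<otimes>\<^bsub>F3\<^esub> gen i \<otimes>\<^bsub>F3\<^esub> inv\<^bsub>F3\<^esub> (gen j)"
proof -
  have ij: "inv\<^bsub>F3\<^esub> (gen j) = [(True, j)]" using assms by (simp add: inv_gen)
  show "[(True, j), (False, i), (False, j)] = inv\<^bsub>F3\<^esub> (gen j) \<otimes>\<^bsub>F3\<^esub> gen i \<otimes>\<^bsub>F3\<^esub> gen j"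
    unfolding ij using assms by (simp add: mult_FG gen_def red1_def inv_pair_def)
  show "[(False, j), (False, i), (True, j)] = gen j \<otimes>\<^bsub>F3\<^esub> gen i \<otimes>\<^bsub>F3\<^esub> inv\<^bsub>F3\<^esub> (gen j)"
    unfolding ij using assms by (simp add: mult_FG gen_def red1_def inv_pair_def)
qed

lemma state_step:
  assumes st: "state \<omega> g" and \<omega>: "\<omega> \<in> auto F3" and i: "i \<in> {1..3}" and j: "j \<in> {1..3}" and ij: "i \<noteq> j"
  shows "state (\<omega> \<otimes>\<^bsub>AutF3\<^esub> xi i j) (g(i := inv\<^bsub>F3\<^esub> (Pc g j) \<otimes>\<^bsub>F3\<^esub> g i))"
    and "state (\<omega> \<otimes>\<^bsub>AutF3\<^esub> xi' i j) (g(i := Pc g j \<otimes>\<^bsub>F3\<^esub> g i))"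
proof -
  interpret w: group_hom F3 F3 \<omega> by (rule auto_gh[OF \<omega>])
  have xa: "xi i j \<in> auto F3" "xi' i j \<in> auto F3" using xi_pair[OF i j ij] by auto
  have gi: "gen i \<in> carrier F3" "gen j \<in> carrier F3" using i j by (auto intro: gen_carrier)
  have gc: "g i \<in> carrier F3" "g j \<in> carrier F3" using st i j by (auto simp: state_def)
  have Pj: "Pc g j \<in> carrier F3" using gc j by (simp add: Pc_carrier)
  have wi: "\<omega> (gen i) = g i \<otimes>\<^bsub>F3\<^esub> gen i \<otimes>\<^bsub>F3\<^esub> inv\<^bsub>F3\<^esub> (g i)" and wj: "\<omega> (gen j) = Pc g j"
    using st i j by (auto simp: state_def Pc_def)
  show "state (\<omega> \<otimes>\<^bsub>AutF3\<^esub> xi i j) (g(i := inv\<^bsub>F3\<^esub> (Pc g j) \<otimes>\<^bsub>F3\<^esub> g i))"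
    unfolding state_def
  proof (intro ballI conjI)
    fix a :: nat assume a: "a \<in> {1..3}"
    show "(g(i := inv\<^bsub>F3\<^esub> (Pc g j) \<otimes>\<^bsub>F3\<^esub> g i)) a \<in> carrier F3"
      using st a Pj gc by (auto simp: state_def)
    show "(\<omega> \<otimes>\<^bsub>AutF3\<^esub> xi i j) (gen a) = (g(i := inv\<^bsub>F3\<^esub> (Pc g j) \<otimes>\<^bsub>F3\<^esub> g i)) a \<otimes>\<^bsub>F3\<^esub> gen a \<otimes>\<^bsub>F3\<^esub>
        inv\<^bsub>F3\<^esub> ((g(i := inv\<^bsub>F3\<^esub> (Pc g j) \<otimes>\<^bsub>F3\<^esub> g i)) a)"
    proof (cases "a = i")
      case True
      have "(\<omega> \<otimes>\<^bsub>AutF3\<^esub> xi i j) (gen a) = \<omega> (inv\<^bsub>F3\<^esub> (gen j) \<otimes>\<^bsub>F3\<^esub> gen i \<otimes>\<^bsub>F3\<^esub> gen j)"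
        using True \<omega> xa a i j ij by (simp add: Aut_mult_apply gen_carrier xi_gen fx_def fx_group(1)[symmetric])
      also have "\<dots> = inv\<^bsub>F3\<^esub> (Pc g j) \<otimes>\<^bsub>F3\<^esub> (g i \<otimes>\<^bsub>F3\<^esub> gen i \<otimes>\<^bsub>F3\<^esub> inv\<^bsub>F3\<^esub> (g i)) \<otimes>\<^bsub>F3\<^esub> Pc g j"
        using gi wi wj by simp
      also have "\<dots> = (inv\<^bsub>F3\<^esub> (Pc g j) \<otimes>\<^bsub>F3\<^esub> g i) \<otimes>\<^bsub>F3\<^esub> gen i \<otimes>\<^bsub>F3\<^esub> inv\<^bsub>F3\<^esub> (inv\<^bsub>F3\<^esub> (Pc g j) \<otimes>\<^bsub>F3\<^esub> g i)"
        using gi gc Pj by (simp add: F3.m_assoc F3.inv_mult_group)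
      finally show ?thesis using True by simp
    next
      case False
      then show ?thesis using st a \<omega> xa i j ij
        by (simp add: Aut_mult_apply gen_carrier xi_gen_other state_def)
    qed
  qed
  show "state (\<omega> \<otimes>\<^bsub>AutF3\<^esub> xi' i j) (g(i := Pc g j \<otimes>\<^bsub>F3\<^esub> g i))"
    unfolding state_def
  proof (intro ballI conjI)
    fix a :: nat assume a: "a \<in> {1..3}"
    show "(g(i := Pc g j \<otimes>\<^bsub>F3\<^esub> g i)) a \<in> carrier F3"
      using st a Pj gc by (auto simp: state_def)
    show "(\<omega> \<otimes>\<^bsub>AutF3\<^esub> xi' i j) (gen a) = (g(i := Pc g j \<otimes>\<^bsub>F3\<^esub> g i)) a \<otimes>\<^bsub>F3\<^esub> gen a \<otimes>\<^bsub>F3\<^esub>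
        inv\<^bsub>F3\<^esub> ((g(i := Pc g j \<otimes>\<^bsub>F3\<^esub> g i)) a)"
    proof (cases "a = i")
      case True
      have "(\<omega> \<otimes>\<^bsub>AutF3\<^esub> xi' i j) (gen a) = \<omega> (gen j \<otimes>\<^bsub>F3\<^esub> gen i \<otimes>\<^bsub>F3\<^esub> inv\<^bsub>F3\<^esub> (gen j))"
        using True \<omega> xa a i j ij by (simp add: Aut_mult_apply gen_carrier xi'_gen fx'_def fx_group(2)[symmetric])
      also have "\<dots> = Pc g j \<otimes>\<^bsub>F3\<^esub> (g i \<otimes>\<^bsub>F3\<^esub> gen i \<otimes>\<^bsub>F3\<^esub> inv\<^bsub>F3\<^esub> (g i)) \<otimes>\<^bsub>F3\<^esub> inv\<^bsub>F3\<^esub> (Pc g j)"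
        using gi wi wj by simp
      also have "\<dots> = (Pc g j \<otimes>\<^bsub>F3\<^esub> g i) \<otimes>\<^bsub>F3\<^esub> gen i \<otimes>\<^bsub>F3\<^esub> inv\<^bsub>F3\<^esub> (Pc g j \<otimes>\<^bsub>F3\<^esub> g i)"
        using gi gc Pj by (simp add: F3.m_assoc F3.inv_mult_group)
      finally show ?thesis using True by simp
    next
      case False
      then show ?thesis using st a \<omega> xa i j ij
        by (simp add: Aut_mult_apply gen_carrier xi'_gen_other state_def)
    qed
  qed
qed

lemma state_one: "state \<one>\<^bsub>AutF3\<^esub> (\<lambda>a. \<one>\<^bsub>F3\<^esub>)"
  by (auto simp: state_def Aut_one gen_carrier)

lemma state_psi: "t \<in> carrier F3 \<Longrightarrow> state (psi t) (\<lambda>a. t)"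
  by (auto simp: state_def psi_apply gen_carrier)

lemma delta_const: "t \<in> carrier F3 \<Longrightarrow> delta (\<lambda>a. t) = 0"
  by (simp add: delta_def)

lemma conj_eq_imp:
  assumes g: "g \<in> carrier F3" and h: "h \<in> carrier F3" and a: "a \<in> {1..3}"
    and e: "g \<otimes>\<^bsub>F3\<^esub> gen a \<otimes>\<^bsub>F3\<^esub> inv\<^bsub>F3\<^esub> g = h \<otimes>\<^bsub>F3\<^esub> gen a \<otimes>\<^bsub>F3\<^esub> inv\<^bsub>F3\<^esub> h"
  shows "\<exists>m::int. h = g \<otimes>\<^bsub>F3\<^esub> gen a [^]\<^bsub>F3\<^esub> m"
proof -
  have x: "gen a \<in> carrier F3" using a by (rule gen_carrier)
  define k where "k = inv\<^bsub>F3\<^esub> g \<otimes>\<^bsub>F3\<^esub> h"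
  have kc: "k \<in> carrier F3" using g h by (simp add: k_def)
  have "inv\<^bsub>F3\<^esub> g \<otimes>\<^bsub>F3\<^esub> (g \<otimes>\<^bsub>F3\<^esub> gen a \<otimes>\<^bsub>F3\<^esub> inv\<^bsub>F3\<^esub> g) \<otimes>\<^bsub>F3\<^esub> h
      = inv\<^bsub>F3\<^esub> g \<otimes>\<^bsub>F3\<^esub> (h \<otimes>\<^bsub>F3\<^esub> gen a \<otimes>\<^bsub>F3\<^esub> inv\<^bsub>F3\<^esub> h) \<otimes>\<^bsub>F3\<^esub> h" using e by simp
  then have "gen a \<otimes>\<^bsub>F3\<^esub> k = k \<otimes>\<^bsub>F3\<^esub> gen a"
    using g h x unfolding k_def by (simp add: F3.m_assoc)
  then obtain m :: int where "k = gen a [^]\<^bsub>F3\<^esub> m" using centralizer[OF kc a] by metis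
  then have "h = g \<otimes>\<^bsub>F3\<^esub> gen a [^]\<^bsub>F3\<^esub> m" using g h unfolding k_def
    by (metis F3.inv_solve_left F3.int_pow_closed x)
  then show ?thesis by blast
qed

lemma pfx_shift:
  assumes g1: "g1 \<in> carrier F3" and g2: "g2 \<in> carrier F3" and j: "j \<in> {2,3}"
  shows "pfx (inv\<^bsub>F3\<^esub> (g1 \<otimes>\<^bsub>F3\<^esub> gen 1 [^]\<^bsub>F3\<^esub> (m1::int)) \<otimes>\<^bsub>F3\<^esub> (g2 \<otimes>\<^bsub>F3\<^esub> gen j [^]\<^bsub>F3\<^esub> (m2::int)))
         = - m1 + pfx (inv\<^bsub>F3\<^esub> g1 \<otimes>\<^bsub>F3\<^esub> g2)"
proof -
  have x1: "gen 1 \<in> carrier F3" by (rule gen_carrier) simp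
  have xj: "gen j \<in> carrier F3" using j by (intro gen_carrier) auto
  have "inv\<^bsub>F3\<^esub> (g1 \<otimes>\<^bsub>F3\<^esub> gen 1 [^]\<^bsub>F3\<^esub> m1) \<otimes>\<^bsub>F3\<^esub> (g2 \<otimes>\<^bsub>F3\<^esub> gen j [^]\<^bsub>F3\<^esub> m2)
      = gen 1 [^]\<^bsub>F3\<^esub> (-m1) \<otimes>\<^bsub>F3\<^esub> ((inv\<^bsub>F3\<^esub> g1 \<otimes>\<^bsub>F3\<^esub> g2) \<otimes>\<^bsub>F3\<^esub> gen j [^]\<^bsub>F3\<^esub> m2)"
    using g1 g2 x1 xj by (simp add: F3.inv_mult_group F3.int_pow_neg F3.m_assoc)
  moreover have "pfx (gen 1 [^]\<^bsub>F3\<^esub> (-m1) \<otimes>\<^bsub>F3\<^esub> ((inv\<^bsub>F3\<^esub> g1 \<otimes>\<^bsub>F3\<^esub> g2) \<otimes>\<^bsub>F3\<^esub> gen j [^]\<^bsub>F3\<^esub> m2))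
      = - m1 + pfx ((inv\<^bsub>F3\<^esub> g1 \<otimes>\<^bsub>F3\<^esub> g2) \<otimes>\<^bsub>F3\<^esub> gen j [^]\<^bsub>F3\<^esub> m2)"
    using pfx_pow1 g1 g2 xj by simp
  moreover have "pfx ((inv\<^bsub>F3\<^esub> g1 \<otimes>\<^bsub>F3\<^esub> g2) \<otimes>\<^bsub>F3\<^esub> gen j [^]\<^bsub>F3\<^esub> m2) = pfx (inv\<^bsub>F3\<^esub> g1 \<otimes>\<^bsub>F3\<^esub> g2)"
    using pfx_mult_pow_other[OF j] g1 g2 by simp
  ultimately show ?thesis by simp
qed

lemma delta_unique:
  assumes s1: "state \<omega> g" and s2: "state \<omega> h"
  shows "delta g = delta h"
proof -
  have ex: "\<exists>m::int. h a = g a \<otimes>\<^bsub>F3\<^esub> gen a [^]\<^bsub>F3\<^esub> m" if a: "a \<in> {1..3}" for a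
    using conj_eq_imp[OF state_carrier[OF s1 a] state_carrier[OF s2 a] a] s1 s2 a
    by (simp add: state_def)
  obtain m1 :: int where m1: "h 1 = g 1 \<otimes>\<^bsub>F3\<^esub> gen 1 [^]\<^bsub>F3\<^esub> m1" using ex[of 1] by auto
  obtain m2 :: int where m2: "h 2 = g 2 \<otimes>\<^bsub>F3\<^esub> gen 2 [^]\<^bsub>F3\<^esub> m2" using ex[of 2] by auto
  obtain m3 :: int where m3: "h 3 = g 3 \<otimes>\<^bsub>F3\<^esub> gen 3 [^]\<^bsub>F3\<^esub> m3" using ex[of 3] by auto
  have c: "g 1 \<in> carrier F3" "g 2 \<in> carrier F3" "g 3 \<in> carrier F3"
    using state_carrier[OF s1] by auto
  show ?thesis unfolding delta_def m1 m2 m3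
    using pfx_shift[OF c(1) c(2), of 2 m1 m2] pfx_shift[OF c(1) c(3), of 3 m1 m3] by simp
qed


declare one_FG[simp del]

definition tf :: "nat \<Rightarrow> letter list \<Rightarrow> letter list" where
  "tf a = (if a = 1 then xi 1 2 else if a = 2 then xi 2 1 else xi 1 3)"
definition Phi :: "letter list \<Rightarrow> letter list \<Rightarrow> letter list" where
  "Phi W = ev AutF3 tf W"

lemma tf_auto: "tf a \<in> auto F3" by (simp add: tf_def xi_auto)
lemma tf_carrier: "tf a \<in> carrier AutF3" by (simp add: carrier_Aut tf_auto)
lemma tf_c: "\<forall>l\<in>set w. tf (snd l) \<in> carrier AutF3" by (simp add: tf_carrier)

lemma Phi_Nil: "Phi [] = \<one>\<^bsub>AutF3\<^esub>" by (simp add: Phi_def)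
lemma Phi_closed: "Phi W \<in> carrier AutF3" unfolding Phi_def by (rule Aut.ev_closed[OF tf_c])
lemma Phi_auto: "Phi W \<in> auto F3" using Phi_closed by (simp add: carrier_Aut)
lemma Phi_append: "Phi (u @ v) = Phi u \<otimes>\<^bsub>AutF3\<^esub> Phi v"
  unfolding Phi_def by (rule Aut.ev_append[OF tf_c tf_c])
lemma Phi_Cons: "Phi (l # v) = ltr AutF3 tf l \<otimes>\<^bsub>AutF3\<^esub> Phi v" by (simp add: Phi_def)
lemma ltr_tf_closed: "ltr AutF3 tf l \<in> carrier AutF3" by (rule Aut.ltr_closed[OF tf_carrier])
lemma Phi_single: "Phi [l] = ltr AutF3 tf l" using ltr_tf_closed by (simp add: Phi_def)

lemma ltr_tf:
  "ltr AutF3 tf (False, 1) = xi 1 2" "ltr AutF3 tf (True, 1) = xi' 1 2"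
  "ltr AutF3 tf (False, 2) = xi 2 1" "ltr AutF3 tf (True, 2) = xi' 2 1"
  "ltr AutF3 tf (False, 3) = xi 1 3" "ltr AutF3 tf (True, 3) = xi' 1 3"
  by (simp_all add: ltr_def tf_def xi_pair)

lemma tf_inv: "inv\<^bsub>AutF3\<^esub> (tf a) = (if a = 1 then xi' 1 2 else if a = 2 then xi' 2 1 else xi' 1 3)"
  by (simp add: tf_def xi_pair)

lemma Phi_fun: "Phi = ev AutF3 tf" by (rule ext) (simp add: Phi_def)

lemma Phi_hom: "Phi \<in> hom F3 AutF3"
  unfolding Phi_fun by (rule ev_hom[OF group_Aut]) (simp add: tf_carrier)

interpretation Phi_gh: group_hom F3 AutF3 Phi
  by (simp add: group_hom_def group_hom_axioms_def group_F3 group_Aut Phi_hom)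

definition Pm :: "(nat \<Rightarrow> letter list) \<Rightarrow> nat \<Rightarrow> letter list" where
  "Pm g a = (if a = 1 then Pc g 2 else Pc g 3)"

lemma Pm_carrier: "\<forall>a\<in>{1..3}. g a \<in> carrier F3 \<Longrightarrow> Pm g a \<in> carrier F3"
  by (simp add: Pm_def Pc_carrier)

lemma state_block:
  "state \<omega> g \<Longrightarrow> \<omega> \<in> auto F3 \<Longrightarrow> \<forall>l\<in>set v. snd l \<in> {1,3} \<Longrightarrow>
    state (\<omega> \<otimes>\<^bsub>AutF3\<^esub> Phi v) (g(1 := inv\<^bsub>F3\<^esub> (ev F3 (Pm g) v) \<otimes>\<^bsub>F3\<^esub> g 1))"
proof (induction v arbitrary: \<omega> g)
  case Nil
  have "\<omega> \<in> carrier AutF3" using Nil by (simp add: carrier_Aut)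
  moreover have "g 1 \<in> carrier F3" using Nil state_carrier by auto
  ultimately show ?case using Nil by (simp add: Phi_Nil)
next
  case (Cons l v)
  note st = Cons.prems(1) and \<omega> = Cons.prems(2) and vl = Cons.prems(3)
  have gc: "\<forall>a\<in>{1..3}. g a \<in> carrier F3" using st state_carrier by auto
  have Pmc: "Pm g a \<in> carrier F3" for a using Pm_carrier[OF gc] .
  have lc: "ltr F3 (Pm g) l \<in> carrier F3" using Pmc by (rule F3.ltr_closed)
  define g' where "g' = g(1 := inv\<^bsub>F3\<^esub> (ltr F3 (Pm g) l) \<otimes>\<^bsub>F3\<^esub> g 1)"
  have sl: "snd l = 1 \<or> snd l = 3" using vl by auto
  have P2: "Pc g 2 \<in> carrier F3" "Pc g 3 \<in> carrier F3" using gc by (auto simp: Pc_carrier)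
  have st': "state (\<omega> \<otimes>\<^bsub>AutF3\<^esub> ltr AutF3 tf l) g'"
  proof -
    obtain b a where l: "l = (b, a)" by (cases l)
    show ?thesis
    proof (cases b)
      case True
      then show ?thesis using sl state_step(2)[OF st \<omega>, of 1 2] state_step(2)[OF st \<omega>, of 1 3] P2
        by (auto simp: g'_def l ltr_def tf_inv Pm_def)
    next
      case False
      then show ?thesis using sl state_step(1)[OF st \<omega>, of 1 2] state_step(1)[OF st \<omega>, of 1 3] P2
        by (auto simp: g'_def l ltr_def tf_def Pm_def)
    qed
  qed
  have \<omega>': "\<omega> \<otimes>\<^bsub>AutF3\<^esub> ltr AutF3 tf l \<in> auto F3"
    using Aut.m_closed[of \<omega> "ltr AutF3 tf l"] \<omega> ltr_tf_closed by (simp add: carrier_Aut)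
  have Pm': "Pm g' = Pm g" by (rule ext) (simp add: Pm_def Pc_def g'_def)
  have IH: "state ((\<omega> \<otimes>\<^bsub>AutF3\<^esub> ltr AutF3 tf l) \<otimes>\<^bsub>AutF3\<^esub> Phi v) (g'(1 := inv\<^bsub>F3\<^esub> (ev F3 (Pm g) v) \<otimes>\<^bsub>F3\<^esub> g' 1))"
  proof -
    have "\<forall>l\<in>set v. snd l \<in> {1,3}" using vl by simp
    from Cons.IH[OF st' \<omega>' this] show ?thesis by (simp only: Pm')
  qed
  have e1: "(\<omega> \<otimes>\<^bsub>AutF3\<^esub> ltr AutF3 tf l) \<otimes>\<^bsub>AutF3\<^esub> Phi v = \<omega> \<otimes>\<^bsub>AutF3\<^esub> Phi (l # v)"
    using \<omega> ltr_tf_closed Phi_closed by (simp add: Phi_Cons Aut.m_assoc carrier_Aut)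
  have evc: "ev F3 (Pm g) v \<in> carrier F3" using Pmc by (simp add: F3.ev_closed)
  have e2: "g'(1 := inv\<^bsub>F3\<^esub> (ev F3 (Pm g) v) \<otimes>\<^bsub>F3\<^esub> g' 1) = g(1 := inv\<^bsub>F3\<^esub> (ev F3 (Pm g) (l # v)) \<otimes>\<^bsub>F3\<^esub> g 1)"
    using lc evc gc by (simp add: g'_def F3.inv_mult_group F3.m_assoc)
  from IH show ?case by (simp only: e1 e2)
qed

lemma ev_conj:
  assumes c: "c \<in> carrier F3" and f: "\<forall>a. f a \<in> carrier F3"
  shows "inv\<^bsub>F3\<^esub> c \<otimes>\<^bsub>F3\<^esub> ev F3 f v \<otimes>\<^bsub>F3\<^esub> c = ev F3 (\<lambda>a. inv\<^bsub>F3\<^esub> c \<otimes>\<^bsub>F3\<^esub> f a \<otimes>\<^bsub>F3\<^esub> c) v"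
proof -
  have ic: "inv\<^bsub>F3\<^esub> c \<in> carrier F3" using c by simp
  have fv: "\<forall>l\<in>set v. f (snd l) \<in> carrier F3" using f by simp
  have "psi (inv\<^bsub>F3\<^esub> c) (ev F3 f v) = ev F3 (\<lambda>a. psi (inv\<^bsub>F3\<^esub> c) (f a)) v"
    by (rule hom_ev_comm[OF group_F3 group_F3 psi_hom_F3[OF ic] fv])
  moreover have "psi (inv\<^bsub>F3\<^esub> c) (ev F3 f v) = inv\<^bsub>F3\<^esub> c \<otimes>\<^bsub>F3\<^esub> ev F3 f v \<otimes>\<^bsub>F3\<^esub> c"
    using F3.ev_closed[OF fv] c by (simp add: psi_apply del: psi_gh.hom_inv)
  moreover have "ev F3 (\<lambda>a. psi (inv\<^bsub>F3\<^esub> c) (f a)) v = ev F3 (\<lambda>a. inv\<^bsub>F3\<^esub> c \<otimes>\<^bsub>F3\<^esub> f a \<otimes>\<^bsub>F3\<^esub> c) v"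
    using f c by (intro ev_cong) (simp add: psi_apply del: psi_gh.hom_inv)
  ultimately show ?thesis by simp
qed

lemma delta_block:
  assumes gc: "\<forall>a\<in>{1..3}. g a \<in> carrier F3" and rv: "reduced v" and vne: "v \<noteq> []"
    and vl: "\<forall>l\<in>set v. snd l \<in> {1,3}"
    and d: "delta g \<noteq> 0 \<or> (g 2 = g 1 \<and> g 3 = g 1)"
  shows "delta (g(1 := inv\<^bsub>F3\<^esub> (ev F3 (Pm g) v) \<otimes>\<^bsub>F3\<^esub> g 1)) = 0"
proof -
  have g1: "g 1 \<in> carrier F3" and g2: "g 2 \<in> carrier F3" and g3: "g 3 \<in> carrier F3" using gc by auto
  have x2: "gen 2 \<in> carrier F3" and x3: "gen 3 \<in> carrier F3" by (auto intro: gen_carrier)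
  have Pmc: "\<forall>a. Pm g a \<in> carrier F3" using Pm_carrier[OF gc] by simp
  define h where "h = ev F3 (Pm g) v"
  have hc: "h \<in> carrier F3" unfolding h_def using Pmc by (simp add: F3.ev_closed)
  define G2 where "G2 = inv\<^bsub>F3\<^esub> (g 1) \<otimes>\<^bsub>F3\<^esub> g 2"
  define G3 where "G3 = inv\<^bsub>F3\<^esub> (g 1) \<otimes>\<^bsub>F3\<^esub> g 3"
  have G2c: "G2 \<in> carrier F3" and G3c: "G3 \<in> carrier F3" using g1 g2 g3 by (simp_all add: G2_def G3_def)
  define ht where "ht = inv\<^bsub>F3\<^esub> (g 1) \<otimes>\<^bsub>F3\<^esub> h \<otimes>\<^bsub>F3\<^esub> g 1"
  have Qeq: "(\<lambda>a. inv\<^bsub>F3\<^esub> (g 1) \<otimes>\<^bsub>F3\<^esub> Pm g a \<otimes>\<^bsub>F3\<^esub> g 1) = Qm G2 G3"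
  proof
    fix a
    show "inv\<^bsub>F3\<^esub> (g 1) \<otimes>\<^bsub>F3\<^esub> Pm g a \<otimes>\<^bsub>F3\<^esub> g 1 = Qm G2 G3 a"
      using g1 g2 g3 x2 x3
      by (simp add: Pm_def Pc_def Qm_def Gof_def xof_def G2_def G3_def F3.m_assoc F3.inv_mult_group)
  qed
  have ht: "ht = ev F3 (Qm G2 G3) v"
    unfolding ht_def h_def using ev_conj[OF g1 Pmc, of v] Qeq by simp
  have key: "inv\<^bsub>F3\<^esub> (inv\<^bsub>F3\<^esub> h \<otimes>\<^bsub>F3\<^esub> g 1) \<otimes>\<^bsub>F3\<^esub> g k = ht \<otimes>\<^bsub>F3\<^esub> (inv\<^bsub>F3\<^esub> (g 1) \<otimes>\<^bsub>F3\<^esub> g k)"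
    if "g k \<in> carrier F3" for k
    using that hc g1 by (simp add: ht_def F3.inv_mult_group F3.m_assoc)
  have dd: "delta (g(1 := inv\<^bsub>F3\<^esub> h \<otimes>\<^bsub>F3\<^esub> g 1)) = pfx (ht \<otimes>\<^bsub>F3\<^esub> G2) - pfx (ht \<otimes>\<^bsub>F3\<^esub> G3)"
    using key[OF g2] key[OF g3] by (simp add: delta_def G2_def G3_def)
  show ?thesis
  proof (cases "delta g \<noteq> 0")
    case True
    then have ne: "pfx G2 \<noteq> pfx G3" by (simp add: delta_def G2_def G3_def)
    have sj: "snd (last v) = 1 \<or> snd (last v) = 3" using vl vne by auto
    have z2: "pfx G2 \<noteq> pfx (Gof G2 G3 (snd (last v))) \<or>
        (\<exists>m::int. G2 = Gof G2 G3 (snd (last v)) \<otimes>\<^bsub>F3\<^esub> gen (xof (snd (last v))) [^]\<^bsub>F3\<^esub> m)"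
      using sj ne G2c by (auto simp: Gof_def intro!: exI[of _ 0])
    have z3: "pfx G3 \<noteq> pfx (Gof G2 G3 (snd (last v))) \<or>
        (\<exists>m::int. G3 = Gof G2 G3 (snd (last v)) \<otimes>\<^bsub>F3\<^esub> gen (xof (snd (last v))) [^]\<^bsub>F3\<^esub> m)"
      using sj ne G3c by (auto simp: Gof_def intro!: exI[of _ 0])
    have "pfx (ht \<otimes>\<^bsub>F3\<^esub> G2) = pfx (Gof G2 G3 (snd (hd v)))"
      unfolding ht by (rule syllable[OF G2c G3c ne rv vne vl G2c z2])
    moreover have "pfx (ht \<otimes>\<^bsub>F3\<^esub> G3) = pfx (Gof G2 G3 (snd (hd v)))"
      unfolding ht by (rule syllable[OF G2c G3c ne rv vne vl G3c z3])
    ultimately show ?thesis using dd h_def by simp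
  next
    case False
    then have "g 2 = g 1 \<and> g 3 = g 1" using d by simp
    then have "G2 = G3" by (simp add: G2_def G3_def)
    then show ?thesis using dd h_def by simp
  qed
qed


declare one_FG[simp del]

definition tb :: "letter list \<Rightarrow> int" where
  "tb W = sum_list (map sg (takeWhile (\<lambda>l. snd l = 2) (rev W)))"

lemma sum_sg_uniform:
  "reduced y \<Longrightarrow> \<forall>l\<in>set y. snd l = i \<Longrightarrow> sum_list (map sg y) = sg (hd y) * int (length y)"
proof (induction y)
  case Nil then show ?case by simp
next
  case (Cons a y)
  show ?case
  proof (cases y)
    case Nil then show ?thesis by simp
  next
    case (Cons b ys)
    then have "a = b" using Cons.prems same_snd_cases[of a b] by auto
    then show ?thesis using Cons.IH Cons.prems \<open>y = b # ys\<close> by (simp add: reduced_Cons algebra_simps)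
  qed
qed

lemma reduced_rev: "reduced w \<Longrightarrow> reduced (rev w)"
proof (induction w)
  case Nil then show ?case by simp
next
  case (Cons l w)
  then have rw: "reduced w" and h: "w = [] \<or> \<not> inv_pair l (hd w)" by (auto simp: reduced_Cons)
  have "w \<noteq> [] \<Longrightarrow> last (rev w) = hd w" by (simp add: last_rev)
  then show ?case using Cons.IH[OF rw] h by (auto simp: reduced_append inv_pair_sym)
qed

lemma tb_nonzero:
  assumes r: "reduced W" and ne: "W \<noteq> []" and l: "snd (last W) = 2"
  shows "tb W \<noteq> 0"
proof -
  let ?t = "takeWhile (\<lambda>l. snd l = 2) (rev W)"
  have rr: "reduced (rev W)" using r by (rule reduced_rev)
  have "reduced ?t" using rr reduced_append[of ?t "dropWhile (\<lambda>l. snd l = 2) (rev W)"] by simp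
  moreover have "\<forall>l\<in>set ?t. snd l = 2" by (meson set_takeWhileD)
  ultimately have s: "tb W = sg (hd ?t) * int (length ?t)" unfolding tb_def by (rule sum_sg_uniform)
  obtain W0 l0 where W: "W = W0 @ [l0]" using ne by (metis append_butlast_last_id)
  then have "?t \<noteq> []" using l by simp
  moreover have "sg (hd ?t) \<noteq> 0" by (simp add: sg_def)
  ultimately show ?thesis using s by simp
qed

lemma tb_zero: "W \<noteq> [] \<Longrightarrow> snd (last W) \<noteq> 2 \<Longrightarrow> tb W = 0"
proof -
  assume ne: "W \<noteq> []" and l: "snd (last W) \<noteq> 2"
  obtain W0 l0 where W: "W = W0 @ [l0]" using ne by (metis append_butlast_last_id)
  then show ?thesis using l by (simp add: tb_def)
qed

lemma tb_snoc: "snd l = 2 \<Longrightarrow> tb (W @ [l]) = sg l + tb W"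
  by (simp add: tb_def)

lemma carrier_append: "u @ v \<in> carrier F3 \<Longrightarrow> u \<in> carrier F3 \<and> v \<in> carrier F3"
  by (auto simp: carrier_FG reduced_append)

lemma pfx_b_step:
  assumes gc: "\<forall>a\<in>{1..3}. g a \<in> carrier F3"
  shows "delta (g(2 := inv\<^bsub>F3\<^esub> (Pc g 1) \<otimes>\<^bsub>F3\<^esub> g 2)) = delta g - 1"
    and "delta (g(2 := Pc g 1 \<otimes>\<^bsub>F3\<^esub> g 2)) = delta g + 1"
proof -
  have g1: "g 1 \<in> carrier F3" and g2: "g 2 \<in> carrier F3" using gc by auto
  have x1: "gen 1 \<in> carrier F3" by (rule gen_carrier) simp
  have y: "inv\<^bsub>F3\<^esub> (g 1) \<otimes>\<^bsub>F3\<^esub> g 2 \<in> carrier F3" using g1 g2 by simp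
  have "inv\<^bsub>F3\<^esub> (g 1) \<otimes>\<^bsub>F3\<^esub> (inv\<^bsub>F3\<^esub> (Pc g 1) \<otimes>\<^bsub>F3\<^esub> g 2) = inv\<^bsub>F3\<^esub> (gen 1) \<otimes>\<^bsub>F3\<^esub> (inv\<^bsub>F3\<^esub> (g 1) \<otimes>\<^bsub>F3\<^esub> g 2)"
    using g1 g2 x1 by (simp add: Pc_def F3.inv_mult_group F3.m_assoc)
  then show "delta (g(2 := inv\<^bsub>F3\<^esub> (Pc g 1) \<otimes>\<^bsub>F3\<^esub> g 2)) = delta g - 1"
    using pfx_invgen1_mult[OF y] by (simp add: delta_def)
  have "inv\<^bsub>F3\<^esub> (g 1) \<otimes>\<^bsub>F3\<^esub> (Pc g 1 \<otimes>\<^bsub>F3\<^esub> g 2) = gen 1 \<otimes>\<^bsub>F3\<^esub> (inv\<^bsub>F3\<^esub> (g 1) \<otimes>\<^bsub>F3\<^esub> g 2)"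
    using g1 g2 x1 by (simp add: Pc_def F3.m_assoc)
  then show "delta (g(2 := Pc g 1 \<otimes>\<^bsub>F3\<^esub> g 2)) = delta g + 1"
    using pfx_gen1_mult[OF y] by (simp add: delta_def)
qed

lemma main_state: "W \<in> carrier F3 \<Longrightarrow> \<exists>g. state (Phi W) g \<and> delta g = - tb W"
proof (induction "length W" arbitrary: W rule: less_induct)
  case less
  note Wc = less.prems
  show ?case
  proof (cases "W = []")
    case True
    have "state (Phi W) (\<lambda>a. \<one>\<^bsub>F3\<^esub>)" using True state_one by (simp add: Phi_Nil)
    moreover have "delta (\<lambda>a. \<one>\<^bsub>F3\<^esub>) = - tb W" using True delta_const[of "\<one>\<^bsub>F3\<^esub>"] by (simp add: tb_def)
    ultimately show ?thesis by blast
  next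
    case False
    define W0 where "W0 = butlast W"
    define l where "l = last W"
    have W: "W = W0 @ [l]" unfolding W0_def l_def using False by simp
    have W0c: "W0 \<in> carrier F3" and lc: "[l] \<in> carrier F3" using carrier_append[of W0 "[l]"] Wc W by auto
    have lenW0: "length W0 < length W" using W by simp
    have lW: "last W = l" using W by simp
    show ?thesis
    proof (cases "snd l = 2")
      case True
      obtain g0 where st0: "state (Phi W0) g0" and d0: "delta g0 = - tb W0"
        using less.hyps[OF lenW0 W0c] by auto
      have gc: "\<forall>a\<in>{1..3}. g0 a \<in> carrier F3" using st0 state_carrier by auto
      have PW: "Phi W = Phi W0 \<otimes>\<^bsub>AutF3\<^esub> ltr AutF3 tf l" using W by (simp add: Phi_append Phi_single)
      have PWa: "Phi W0 \<in> auto F3" by (rule Phi_auto)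
      show ?thesis
      proof (cases "fst l")
        case True
        then have l: "l = (True, 2)" using \<open>snd l = 2\<close> by (cases l) auto
        have "state (Phi W) (g0(2 := Pc g0 1 \<otimes>\<^bsub>F3\<^esub> g0 2))"
          using state_step(2)[OF st0 PWa, of 2 1] PW l by (simp add: ltr_tf)
        moreover have "delta (g0(2 := Pc g0 1 \<otimes>\<^bsub>F3\<^esub> g0 2)) = - tb W"
          using pfx_b_step(2)[OF gc] d0 tb_snoc[of l W0] W l by (simp add: sg_def)
        ultimately show ?thesis by blast
      next
        case False
        then have l: "l = (False, 2)" using \<open>snd l = 2\<close> by (cases l) auto
        have "state (Phi W) (g0(2 := inv\<^bsub>F3\<^esub> (Pc g0 1) \<otimes>\<^bsub>F3\<^esub> g0 2))"
          using state_step(1)[OF st0 PWa, of 2 1] PW l by (simp add: ltr_tf)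
        moreover have "delta (g0(2 := inv\<^bsub>F3\<^esub> (Pc g0 1) \<otimes>\<^bsub>F3\<^esub> g0 2)) = - tb W"
          using pfx_b_step(1)[OF gc] d0 tb_snoc[of l W0] W l by (simp add: sg_def)
        ultimately show ?thesis by blast
      qed
    next
      case False
      define P where "P = (\<lambda>l::letter. snd l \<noteq> 2)"
      define v where "v = rev (takeWhile P (rev W))"
      define V0 where "V0 = rev (dropWhile P (rev W))"
      have "rev W = takeWhile P (rev W) @ dropWhile P (rev W)" by simp
      then have "W = rev (dropWhile P (rev W)) @ rev (takeWhile P (rev W))"
        by (metis rev_append rev_rev_ident)
      then have WV: "W = V0 @ v" unfolding v_def V0_def .
      have rW: "rev W = l # rev W0" using W by simp
      have vne: "v \<noteq> []" unfolding v_def P_def using rW False by simp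
      have V0c: "V0 \<in> carrier F3" and vc: "v \<in> carrier F3" using carrier_append[of V0 v] WV Wc by auto
      have rv: "reduced v" using vc by (simp add: carrier_FG)
      have vP: "\<forall>l\<in>set v. P l" unfolding v_def by (auto dest: set_takeWhileD)
      have vl: "\<forall>l\<in>set v. snd l \<in> {1,3}"
      proof
        fix x assume x: "x \<in> set v"
        then have "snd x \<in> {1..3}" using vc by (auto simp: carrier_FG)
        moreover have "snd x \<noteq> 2" using vP x by (simp add: P_def)
        ultimately show "snd x \<in> {1,3}" by auto
      qed
      have lenV0: "length V0 < length W" using WV vne by simp
      have V0last: "V0 \<noteq> [] \<Longrightarrow> snd (last V0) = 2"
      proof -
        assume "V0 \<noteq> []"
        then have ne: "dropWhile P (rev W) \<noteq> []" unfolding V0_def by simp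
        have "last V0 = hd (dropWhile P (rev W))" unfolding V0_def using ne by (simp add: last_rev)
        then show ?thesis using hd_dropWhile[OF ne] by (simp add: P_def)
      qed
      have PW: "Phi W = Phi V0 \<otimes>\<^bsub>AutF3\<^esub> Phi v" using WV by (simp add: Phi_append)
      obtain g0 where st0: "state (Phi V0) g0" and d0: "delta g0 \<noteq> 0 \<or> (g0 2 = g0 1 \<and> g0 3 = g0 1)"
      proof (cases "V0 = []")
        case True
        then show ?thesis using that[of "\<lambda>a. \<one>\<^bsub>F3\<^esub>"] state_one by (simp add: Phi_Nil)
      next
        case False
        obtain g0 where st0: "state (Phi V0) g0" and d0: "delta g0 = - tb V0"
          using less.hyps[OF lenV0 V0c] by auto
        have "tb V0 \<noteq> 0" using tb_nonzero[OF _ False V0last[OF False]] V0c by (simp add: carrier_FG)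
        then show ?thesis using that[OF st0] d0 by simp
      qed
      have gc: "\<forall>a\<in>{1..3}. g0 a \<in> carrier F3" using st0 state_carrier by auto
      have "state (Phi W) (g0(1 := inv\<^bsub>F3\<^esub> (ev F3 (Pm g0) v) \<otimes>\<^bsub>F3\<^esub> g0 1))"
        using state_block[OF st0 Phi_auto vl] PW by simp
      moreover have "delta (g0(1 := inv\<^bsub>F3\<^esub> (ev F3 (Pm g0) v) \<otimes>\<^bsub>F3\<^esub> g0 1)) = - tb W"
        using delta_block[OF gc rv vne vl d0] tb_zero[of W] \<open>W \<noteq> []\<close> False lW by simp
      ultimately show ?thesis by blast
    qed
  qed
qed

lemma Phi_not_inner2:
  assumes Wc: "W \<in> carrier F3" and ne: "W \<noteq> []" and l: "snd (last W) = 2" and t: "t \<in> carrier F3"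
  shows "Phi W \<noteq> psi t"
proof
  assume e: "Phi W = psi t"
  obtain g where st: "state (Phi W) g" and d: "delta g = - tb W" using main_state[OF Wc] by auto
  have "delta g = delta (\<lambda>a. t)" using delta_unique[OF st] state_psi[OF t] e by simp
  then have "tb W = 0" using d delta_const[OF t] by simp
  moreover have "tb W \<noteq> 0" using tb_nonzero[OF _ ne l] Wc by (simp add: carrier_FG)
  ultimately show False by simp
qed

lemma Phi_not_inner:
  assumes Wc: "W \<in> carrier F3" and ne: "W \<noteq> []" and t: "t \<in> carrier F3"
  shows "Phi W \<noteq> psi t"
proof (cases "snd (last W) = 2")
  case True then show ?thesis by (rule Phi_not_inner2[OF Wc ne _ t])
next
  case False
  have x2: "gen 2 \<in> carrier F3" by (rule gen_carrier) simp
  have rW: "reduced W" using Wc by (simp add: carrier_FG)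
  have i2: "inv\<^bsub>F3\<^esub> (gen 2) = [(True, 2)]" by (simp add: inv_gen)
  define W' where "W' = gen 2 \<otimes>\<^bsub>F3\<^esub> W \<otimes>\<^bsub>F3\<^esub> inv\<^bsub>F3\<^esub> (gen 2)"
  have W'c: "W' \<in> carrier F3" unfolding W'_def using x2 Wc by simp
  have a1: "W \<otimes>\<^bsub>F3\<^esub> inv\<^bsub>F3\<^esub> (gen 2) = W @ [(True, 2)]"
    unfolding i2 mult_FG using red_snoc[OF rW, of "(True, 2)"] False ne by (auto simp: inv_pair_def)
  have rW2: "reduced (W @ [(True, 2)])" using False ne rW by (auto simp: reduced_append inv_pair_def)
  obtain w1 ws where W1: "W = w1 # ws" using ne by (cases W) auto
  have "W' = gen 2 \<otimes>\<^bsub>F3\<^esub> (W \<otimes>\<^bsub>F3\<^esub> inv\<^bsub>F3\<^esub> (gen 2))" unfolding W'_def using x2 Wc by (simp add: F3.m_assoc)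
  also have "\<dots> = gen 2 \<otimes>\<^bsub>F3\<^esub> (W @ [(True, 2)])" by (simp only: a1)
  also have "\<dots> = red1 (False, 2) (W @ [(True, 2)])"
    using red_reduced[OF rW2] by (simp add: mult_FG gen_def)
  finally have "W' = red1 (False, 2) (W @ [(True, 2)])" .
  then have W'e: "W' \<noteq> [] \<and> last W' = (True, 2)" using W1 by (auto simp: red1_def)
  show ?thesis
  proof
    assume e: "Phi W = psi t"
    have xa: "xi 2 1 \<in> auto F3" by (simp add: xi_auto)
    have "Phi (gen 2) = xi 2 1" by (simp add: gen_def Phi_single ltr_tf)
    then have "Phi W' = xi 2 1 \<otimes>\<^bsub>AutF3\<^esub> psi t \<otimes>\<^bsub>AutF3\<^esub> inv\<^bsub>AutF3\<^esub> (xi 2 1)"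
      unfolding W'_def using x2 Wc e by simp
    also have "\<dots> = psi (xi 2 1 t)" by (rule psi_conj[OF xa t])
    finally have pe: "Phi W' = psi (xi 2 1 t)" .
    have c: "xi 2 1 t \<in> carrier F3" using xa t by (rule auto_closed)
    have s2: "snd (last W') = 2" using W'e by simp
    have "Phi W' \<noteq> psi (xi 2 1 t)" by (rule Phi_not_inner2[OF W'c conjunct1[OF W'e] s2 c])
    with pe show False by simp
  qed
qed


declare one_FG[simp del]

lemma tf_P: "tf a \<in> carrier PSigma3" by (simp add: tf_def xi_in_P)

lemma ltr_P: "ltr AutF3 tf l \<in> carrier PSigma3"
  using tf_P[of "snd l"] P.inv_closed[OF tf_P[of "snd l"]] inv_PSigma3[OF tf_P[of "snd l"]]
  by (simp add: ltr_def)

lemma Phi_P: "Phi W \<in> carrier PSigma3"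
proof (induction W)
  case Nil then show ?case using P.one_closed by (simp add: Phi_Nil)
next
  case (Cons l W)
  then show ?case using P.m_closed[OF ltr_P Cons.IH] by (simp add: Phi_Cons)
qed

lemma Phi_hom_P: "Phi \<in> hom F3 PSigma3"
  by (rule homI) (simp_all add: Phi_P)

interpretation Phi_P: group_hom F3 PSigma3 Phi
  by (simp add: group_hom_def group_hom_axioms_def group_F3 group_PSigma3 Phi_hom_P)

interpretation V3n: normal V3 PSigma3 by (rule V3_normal)

lemma group_OP: "group OPSigma3" unfolding OPSigma3_def by (rule V3n.factorgroup_is_group)

definition phi :: "letter list \<Rightarrow> (letter list \<Rightarrow> letter list) set" where
  "phi W = V3 #>\<^bsub>PSigma3\<^esub> Phi W"

lemma r_hom: "(\<lambda>a. V3 #>\<^bsub>PSigma3\<^esub> a) \<in> hom PSigma3 OPSigma3"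
  unfolding OPSigma3_def by (rule V3n.r_coset_hom_Mod)

interpretation r: group_hom PSigma3 OPSigma3 "\<lambda>a. V3 #>\<^bsub>PSigma3\<^esub> a"
  by (simp add: group_hom_def group_hom_axioms_def group_PSigma3 group_OP r_hom)

lemma phi_hom: "phi \<in> hom F3 OPSigma3"
proof -
  have "(\<lambda>a. V3 #>\<^bsub>PSigma3\<^esub> a) \<circ> Phi \<in> hom F3 OPSigma3" by (rule hom_compose[OF Phi_hom_P r_hom])
  moreover have "phi = (\<lambda>a. V3 #>\<^bsub>PSigma3\<^esub> a) \<circ> Phi" by (rule ext) (simp add: phi_def)
  ultimately show ?thesis by simp
qed

interpretation phi: group_hom F3 OPSigma3 phi
  by (simp add: group_hom_def group_hom_axioms_def group_F3 group_OP phi_hom)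

lemma Phi_gen: "Phi (gen 1) = xi 1 2" "Phi (gen 2) = xi 2 1" "Phi (gen 3) = xi 1 3"
  by (simp_all add: gen_def Phi_single ltr_def tf_def)

lemma phi_gen: "phi (gen 1) = V3 #>\<^bsub>PSigma3\<^esub> xi 1 2" "phi (gen 2) = V3 #>\<^bsub>PSigma3\<^esub> xi 2 1"
  "phi (gen 3) = V3 #>\<^bsub>PSigma3\<^esub> xi 1 3"
  by (simp_all only: phi_def Phi_gen)

lemma V3_subgroup: "subgroup V3 PSigma3" by (rule V3n.subgroup_axioms)

lemma Phi_in_V3: "W \<in> carrier F3 \<Longrightarrow> Phi W \<in> V3 \<Longrightarrow> W = \<one>\<^bsub>F3\<^esub>"
proof -
  assume W: "W \<in> carrier F3" and v: "Phi W \<in> V3"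
  then obtain t where t: "t \<in> carrier F3" and e: "Phi W = psi t" using V3_psi by auto
  show "W = \<one>\<^bsub>F3\<^esub>"
  proof (rule ccontr)
    assume "W \<noteq> \<one>\<^bsub>F3\<^esub>"
    then have "W \<noteq> []" by (simp add: one_FG)
    then show False using Phi_not_inner[OF W _ t] e by simp
  qed
qed

lemma phi_inj: "inj_on phi (carrier F3)"
proof -
  have "kernel F3 OPSigma3 phi = {\<one>\<^bsub>F3\<^esub>}"
  proof
    show "kernel F3 OPSigma3 phi \<subseteq> {\<one>\<^bsub>F3\<^esub>}"
    proof
      fix W assume "W \<in> kernel F3 OPSigma3 phi"
      then have W: "W \<in> carrier F3" and e: "V3 #>\<^bsub>PSigma3\<^esub> Phi W = V3"
        by (auto simp: kernel_def phi_def OPSigma3_def)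
      have "Phi W \<in> V3 #>\<^bsub>PSigma3\<^esub> Phi W" by (rule P.rcos_self[OF Phi_P V3_subgroup])
      then have "Phi W \<in> V3" using e by simp
      then show "W \<in> {\<one>\<^bsub>F3\<^esub>}" using Phi_in_V3[OF W] by simp
    qed
  next
    show "{\<one>\<^bsub>F3\<^esub>} \<subseteq> kernel F3 OPSigma3 phi" by (auto simp: kernel_def)
  qed
  then show ?thesis by (simp add: phi.inj_iff_trivial_ker)
qed

lemma nu_in_V3: "nu 1 \<in> V3" "nu 2 \<in> V3" "nu 3 \<in> V3"
  by (simp_all add: V3_alt NU_def generate.incl)

lemma r_V3: "x \<in> V3 \<Longrightarrow> V3 #>\<^bsub>PSigma3\<^esub> x = \<one>\<^bsub>OPSigma3\<^esub>"
  by (simp add: OPSigma3_def V3n.rcos_const group_PSigma3)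

lemma r_other:
  assumes a: "a \<in> carrier PSigma3" and b: "b \<in> carrier PSigma3" and ab: "a \<otimes>\<^bsub>AutF3\<^esub> b \<in> V3"
  shows "V3 #>\<^bsub>PSigma3\<^esub> a = inv\<^bsub>OPSigma3\<^esub> (V3 #>\<^bsub>PSigma3\<^esub> b)"
proof -
  have "(V3 #>\<^bsub>PSigma3\<^esub> a) \<otimes>\<^bsub>OPSigma3\<^esub> (V3 #>\<^bsub>PSigma3\<^esub> b) = \<one>\<^bsub>OPSigma3\<^esub>"
    using r.hom_mult[OF a b] r_V3[OF ab] by simp
  then show ?thesis using group.inv_equality[OF group_OP] r.hom_closed a b by metis
qed

lemma XI_img: "h \<in> XI \<Longrightarrow> V3 #>\<^bsub>PSigma3\<^esub> h \<in> phi ` carrier F3"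
proof -
  assume "h \<in> XI"
  then obtain i j where h: "h = xi i j" and i: "i \<in> {1..3}" and j: "j \<in> {1..3}" and ij: "i \<noteq> j"
    by (auto simp: XI_def)
  have g: "gen 1 \<in> carrier F3" "gen 2 \<in> carrier F3" "gen 3 \<in> carrier F3" by (auto intro: gen_carrier)
  have I: "phi ` carrier F3 \<subseteq> carrier OPSigma3" using phi.hom_closed by auto
  have inv_img: "inv\<^bsub>OPSigma3\<^esub> (phi x) \<in> phi ` carrier F3" if "x \<in> carrier F3" for x
    using that phi.hom_inv[OF that] F3.inv_closed[OF that] by (metis image_eqI)
  have cases6: "(i = 1 \<and> j = 2) \<or> (i = 2 \<and> j = 1) \<or> (i = 1 \<and> j = 3) \<or> (i = 3 \<and> j = 1) \<or> (i = 2 \<and> j = 3) \<or> (i = 3 \<and> j = 2)"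
    using i j ij by auto
  have xp: "xi 1 2 \<in> carrier PSigma3" "xi 2 1 \<in> carrier PSigma3" "xi 1 3 \<in> carrier PSigma3"
    "xi 3 1 \<in> carrier PSigma3" "xi 2 3 \<in> carrier PSigma3" "xi 3 2 \<in> carrier PSigma3"
    by (simp_all add: xi_in_P)
  have c1: "V3 #>\<^bsub>PSigma3\<^esub> xi 1 2 \<in> phi ` carrier F3" using phi_gen(1) g by (metis image_eqI)
  have c2: "V3 #>\<^bsub>PSigma3\<^esub> xi 2 1 \<in> phi ` carrier F3" using phi_gen(2) g by (metis image_eqI)
  have c3: "V3 #>\<^bsub>PSigma3\<^esub> xi 1 3 \<in> phi ` carrier F3" using phi_gen(3) g by (metis image_eqI)
  have c4: "V3 #>\<^bsub>PSigma3\<^esub> xi 3 1 \<in> phi ` carrier F3"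
    using r_other[OF xp(4) xp(2)] nu_prod(1) nu_in_V3(1) inv_img[OF g(2)] phi_gen(2) by simp
  have c5: "V3 #>\<^bsub>PSigma3\<^esub> xi 3 2 \<in> phi ` carrier F3"
    using r_other[OF xp(6) xp(1)] nu_prod(2) nu_in_V3(2) inv_img[OF g(1)] phi_gen(1) by simp
  have c6: "V3 #>\<^bsub>PSigma3\<^esub> xi 2 3 \<in> phi ` carrier F3"
    using r_other[OF xp(5) xp(3)] nu_prod(3) nu_in_V3(3) inv_img[OF g(3)] phi_gen(3) by simp
  show ?thesis using cases6 c1 c2 c3 c4 c5 c6 h by auto
qed

lemma phi_surj: "phi ` carrier F3 = carrier OPSigma3"
proof
  show "phi ` carrier F3 \<subseteq> carrier OPSigma3" using phi.hom_closed by auto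
next
  show "carrier OPSigma3 \<subseteq> phi ` carrier F3"
  proof
    fix Y assume "Y \<in> carrier OPSigma3"
    then obtain g where g: "g \<in> carrier PSigma3" and Y: "Y = V3 #>\<^bsub>PSigma3\<^esub> g"
      by (auto simp: OPSigma3_def carrier_FactGroup)
    have sI: "subgroup (phi ` carrier F3) OPSigma3" by (rule phi.img_is_subgroup)
    have "g \<in> generate AutF3 XI" using g carrier_PSigma3 by simp
    then have "V3 #>\<^bsub>PSigma3\<^esub> g \<in> phi ` carrier F3"
    proof (induction rule: generate.induct)
      case one
      have "V3 #>\<^bsub>PSigma3\<^esub> \<one>\<^bsub>PSigma3\<^esub> = \<one>\<^bsub>OPSigma3\<^esub>" by (rule r.hom_one)
      then show ?case using subgroup.one_closed[OF sI] by simp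
    next
      case (incl h) then show ?case by (rule XI_img)
    next
      case (inv h)
      have hP: "h \<in> carrier PSigma3" using inv carrier_PSigma3 generate.incl by metis
      have "V3 #>\<^bsub>PSigma3\<^esub> (inv\<^bsub>AutF3\<^esub> h) = inv\<^bsub>OPSigma3\<^esub> (V3 #>\<^bsub>PSigma3\<^esub> h)"
        using r.hom_inv[OF hP] inv_PSigma3[OF hP] by simp
      then show ?case using subgroup.m_inv_closed[OF sI XI_img[OF inv]] by simp
    next
      case (eng h1 h2)
      have "h1 \<in> carrier PSigma3" "h2 \<in> carrier PSigma3" using eng.hyps carrier_PSigma3 by auto
      then have "V3 #>\<^bsub>PSigma3\<^esub> (h1 \<otimes>\<^bsub>AutF3\<^esub> h2) = (V3 #>\<^bsub>PSigma3\<^esub> h1) \<otimes>\<^bsub>OPSigma3\<^esub> (V3 #>\<^bsub>PSigma3\<^esub> h2)"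
        using r.hom_mult by simp
      then show ?case using subgroup.m_closed[OF sI eng.IH] by simp
    qed
    then show "Y \<in> phi ` carrier F3" using Y by simp
  qed
qed

lemma phi_iso: "phi \<in> iso F3 OPSigma3"
  using phi_hom phi_inj phi_surj by (simp add: iso_def bij_betw_def)


declare one_FG[simp del]

lemma H_subgroup: "subgroup (Phi ` carrier F3) PSigma3" by (rule Phi_P.img_is_subgroup)

lemma H_inter: "Phi ` carrier F3 \<inter> V3 = {\<one>\<^bsub>PSigma3\<^esub>}"
proof
  show "Phi ` carrier F3 \<inter> V3 \<subseteq> {\<one>\<^bsub>PSigma3\<^esub>}"
  proof
    fix x assume "x \<in> Phi ` carrier F3 \<inter> V3"
    then obtain W where W: "W \<in> carrier F3" and x: "x = Phi W" and v: "Phi W \<in> V3" by auto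
    have "W = \<one>\<^bsub>F3\<^esub>" by (rule Phi_in_V3[OF W v])
    then show "x \<in> {\<one>\<^bsub>PSigma3\<^esub>}" using x Phi_P.hom_one by simp
  qed
next
  have "\<one>\<^bsub>PSigma3\<^esub> \<in> Phi ` carrier F3" using Phi_P.hom_one F3.one_closed by (metis image_eqI)
  moreover have "\<one>\<^bsub>PSigma3\<^esub> \<in> V3" by (rule subgroup.one_closed[OF V3_subgroup])
  ultimately show "{\<one>\<^bsub>PSigma3\<^esub>} \<subseteq> Phi ` carrier F3 \<inter> V3" by simp
qed

lemma H_prod: "V3 <#>\<^bsub>PSigma3\<^esub> (Phi ` carrier F3) = carrier PSigma3"
proof
  show "V3 <#>\<^bsub>PSigma3\<^esub> (Phi ` carrier F3) \<subseteq> carrier PSigma3"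
  proof
    fix x assume "x \<in> V3 <#>\<^bsub>PSigma3\<^esub> (Phi ` carrier F3)"
    then obtain v w where v: "v \<in> V3" and x: "x = v \<otimes>\<^bsub>PSigma3\<^esub> Phi w" by (auto simp: set_mult_def)
    have "v \<in> carrier PSigma3" using v V3_sub by auto
    then show "x \<in> carrier PSigma3" using P.m_closed[OF _ Phi_P] x by blast
  qed
next
  show "carrier PSigma3 \<subseteq> V3 <#>\<^bsub>PSigma3\<^esub> (Phi ` carrier F3)"
  proof
    fix g assume g: "g \<in> carrier PSigma3"
    have "V3 #>\<^bsub>PSigma3\<^esub> g \<in> carrier OPSigma3"
      using g by (simp add: OPSigma3_def carrier_FactGroup)
    then obtain W where W: "W \<in> carrier F3" and e: "V3 #>\<^bsub>PSigma3\<^esub> g = phi W"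
      using phi_surj by (metis imageE)
    have "g \<in> V3 #>\<^bsub>PSigma3\<^esub> g" by (rule P.rcos_self[OF g V3_subgroup])
    then have "g \<in> V3 #>\<^bsub>PSigma3\<^esub> Phi W" using e by (simp add: phi_def)
    then obtain v where v: "v \<in> V3" and gv: "g = v \<otimes>\<^bsub>PSigma3\<^esub> Phi W" by (auto simp: r_coset_def)
    then show "g \<in> V3 <#>\<^bsub>PSigma3\<^esub> (Phi ` carrier F3)" using W by (auto simp: set_mult_def)
  qed
qed

definition D :: "letter list set" where "D = derived F3 (carrier F3)"

lemma D_normal: "D \<lhd> F3" unfolding D_def by (rule F3.derived_self_is_normal)

interpretation Dn: normal D F3 by (rule D_normal)

lemma comm_in_D: "x \<in> carrier F3 \<Longrightarrow> y \<in> carrier F3 \<Longrightarrow>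
    x \<otimes>\<^bsub>F3\<^esub> y \<otimes>\<^bsub>F3\<^esub> inv\<^bsub>F3\<^esub> x \<otimes>\<^bsub>F3\<^esub> inv\<^bsub>F3\<^esub> y \<in> D"
  unfolding D_def derived_def by (rule generate.incl) blast

lemma gen_comm_D:
  assumes \<sigma>: "\<sigma> \<in> auto F3" and hg: "\<forall>a\<in>{1..3}. \<sigma> (gen a) \<otimes>\<^bsub>F3\<^esub> inv\<^bsub>F3\<^esub> (gen a) \<in> D"
  shows "t \<in> carrier F3 \<Longrightarrow> \<sigma> t \<otimes>\<^bsub>F3\<^esub> inv\<^bsub>F3\<^esub> t \<in> D"
proof -
  interpret s: group_hom F3 F3 \<sigma> by (rule auto_gh[OF \<sigma>])
  assume "t \<in> carrier F3"
  then have "t \<in> generate F3 (gen ` {1..3})" using carrier_generate[of 3] by simp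
  then show ?thesis
  proof (induction rule: generate.induct)
    case one then show ?case using Dn.one_closed by simp
  next
    case (incl h) then show ?case using hg by auto
  next
    case (inv h)
    then obtain a where a: "a \<in> {1..3}" and h: "h = gen a" by auto
    have x: "h \<in> carrier F3" using a h by (simp add: gen_carrier)
    have d: "\<sigma> h \<otimes>\<^bsub>F3\<^esub> inv\<^bsub>F3\<^esub> h \<in> D" using hg a h by simp
    have sx: "\<sigma> h \<in> carrier F3" using x by simp
    have "inv\<^bsub>F3\<^esub> h \<otimes>\<^bsub>F3\<^esub> inv\<^bsub>F3\<^esub> (\<sigma> h \<otimes>\<^bsub>F3\<^esub> inv\<^bsub>F3\<^esub> h) \<otimes>\<^bsub>F3\<^esub> inv\<^bsub>F3\<^esub> (inv\<^bsub>F3\<^esub> h) \<in> D"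
      using Dn.inv_op_closed2[OF F3.inv_closed[OF x] Dn.m_inv_closed[OF d]] .
    moreover have "inv\<^bsub>F3\<^esub> h \<otimes>\<^bsub>F3\<^esub> inv\<^bsub>F3\<^esub> (\<sigma> h \<otimes>\<^bsub>F3\<^esub> inv\<^bsub>F3\<^esub> h) \<otimes>\<^bsub>F3\<^esub> inv\<^bsub>F3\<^esub> (inv\<^bsub>F3\<^esub> h)
        = \<sigma> (inv\<^bsub>F3\<^esub> h) \<otimes>\<^bsub>F3\<^esub> inv\<^bsub>F3\<^esub> (inv\<^bsub>F3\<^esub> h)"
      using x sx by (simp add: F3.inv_mult_group F3.m_assoc)
    ultimately show ?case by simp
  next
    case (eng h1 h2)
    have c: "h1 \<in> carrier F3" "h2 \<in> carrier F3" using eng.hyps carrier_generate[of 3] by auto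
    have "\<sigma> (h1 \<otimes>\<^bsub>F3\<^esub> h2) \<otimes>\<^bsub>F3\<^esub> inv\<^bsub>F3\<^esub> (h1 \<otimes>\<^bsub>F3\<^esub> h2)
        = (\<sigma> h1 \<otimes>\<^bsub>F3\<^esub> inv\<^bsub>F3\<^esub> h1) \<otimes>\<^bsub>F3\<^esub> (h1 \<otimes>\<^bsub>F3\<^esub> (\<sigma> h2 \<otimes>\<^bsub>F3\<^esub> inv\<^bsub>F3\<^esub> h2) \<otimes>\<^bsub>F3\<^esub> inv\<^bsub>F3\<^esub> h1)"
      using c by (simp add: F3.inv_mult_group F3.m_assoc)
    moreover have "h1 \<otimes>\<^bsub>F3\<^esub> (\<sigma> h2 \<otimes>\<^bsub>F3\<^esub> inv\<^bsub>F3\<^esub> h2) \<otimes>\<^bsub>F3\<^esub> inv\<^bsub>F3\<^esub> h1 \<in> D"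
      using Dn.inv_op_closed2[OF c(1) eng.IH(2)] .
    ultimately show ?case using Dn.m_closed[OF eng.IH(1)] by simp
  qed
qed

lemma xi_D:
  assumes i: "i \<in> {1..3}" and j: "j \<in> {1..3}" and ij: "i \<noteq> j"
  shows "\<forall>a\<in>{1..3}. xi i j (gen a) \<otimes>\<^bsub>F3\<^esub> inv\<^bsub>F3\<^esub> (gen a) \<in> D"
proof
  fix a :: nat assume a: "a \<in> {1..3}"
  have gi: "gen i \<in> carrier F3" "gen j \<in> carrier F3" "gen a \<in> carrier F3"
    using i j a by (auto intro: gen_carrier)
  show "xi i j (gen a) \<otimes>\<^bsub>F3\<^esub> inv\<^bsub>F3\<^esub> (gen a) \<in> D"
  proof (cases "a = i")
    case True
    have "xi i j (gen a) = inv\<^bsub>F3\<^esub> (gen j) \<otimes>\<^bsub>F3\<^esub> gen i \<otimes>\<^bsub>F3\<^esub> gen j"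
      using True i j ij by (simp add: xi_gen fx_def fx_group(1)[symmetric])
    then have "xi i j (gen a) \<otimes>\<^bsub>F3\<^esub> inv\<^bsub>F3\<^esub> (gen a)
        = inv\<^bsub>F3\<^esub> (gen j) \<otimes>\<^bsub>F3\<^esub> gen i \<otimes>\<^bsub>F3\<^esub> inv\<^bsub>F3\<^esub> (inv\<^bsub>F3\<^esub> (gen j)) \<otimes>\<^bsub>F3\<^esub> inv\<^bsub>F3\<^esub> (gen i)"
      using True gi by simp
    then show ?thesis using comm_in_D[OF F3.inv_closed[OF gi(2)] gi(1)] by simp
  next
    case False
    then show ?thesis using i j ij a gi Dn.one_closed by (simp add: xi_gen_other)
  qed
qed

lemma P_D:
  assumes g: "g \<in> carrier PSigma3"
  shows "t \<in> carrier F3 \<Longrightarrow> g t \<otimes>\<^bsub>F3\<^esub> inv\<^bsub>F3\<^esub> t \<in> D"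
proof -
  have "g \<in> generate AutF3 XI" using g carrier_PSigma3 by simp
  then show "t \<in> carrier F3 \<Longrightarrow> g t \<otimes>\<^bsub>F3\<^esub> inv\<^bsub>F3\<^esub> t \<in> D"
  proof (induction arbitrary: t rule: generate.induct)
    case one then show ?case using Dn.one_closed by (simp add: Aut_one)
  next
    case (incl h)
    then obtain i j where h: "h = xi i j" and i: "i \<in> {1..3}" and j: "j \<in> {1..3}" and ij: "i \<noteq> j"
      by (auto simp: XI_def)
    show ?case using gen_comm_D[OF xi_auto[OF i j ij] xi_D[OF i j ij] incl.prems] h by simp
  next
    case (inv h)
    then obtain i j where h: "h = xi i j" and i: "i \<in> {1..3}" and j: "j \<in> {1..3}" and ij: "i \<noteq> j"
      by (auto simp: XI_def)
    have ha: "h \<in> auto F3" using h xi_auto[OF i j ij] by simp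
    define s where "s = (inv\<^bsub>AutF3\<^esub> h) t"
    have sc: "s \<in> carrier F3" unfolding s_def using Aut_inv_closed[OF ha] inv.prems by (rule auto_closed)
    have hs: "h s = t" unfolding s_def by (rule Aut_inv_apply1[OF ha inv.prems])
    have hg: "\<forall>a\<in>{1..3}. h (gen a) \<otimes>\<^bsub>F3\<^esub> inv\<^bsub>F3\<^esub> (gen a) \<in> D" using xi_D[OF i j ij] h by simp
    have "h s \<otimes>\<^bsub>F3\<^esub> inv\<^bsub>F3\<^esub> s \<in> D" by (rule gen_comm_D[OF ha hg sc])
    then have "inv\<^bsub>F3\<^esub> (t \<otimes>\<^bsub>F3\<^esub> inv\<^bsub>F3\<^esub> s) \<in> D" using hs Dn.m_inv_closed by simp
    then show ?case using sc inv.prems by (simp add: F3.inv_mult_group s_def)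
  next
    case (eng h1 h2)
    have a: "h1 \<in> auto F3" "h2 \<in> auto F3"
      using eng.hyps carrier_PSigma3 PSigma3_auto by auto
    have h2t: "h2 t \<in> carrier F3" using a(2) eng.prems by (rule auto_closed)
    have "(h1 \<otimes>\<^bsub>AutF3\<^esub> h2) t \<otimes>\<^bsub>F3\<^esub> inv\<^bsub>F3\<^esub> t = (h1 (h2 t) \<otimes>\<^bsub>F3\<^esub> inv\<^bsub>F3\<^esub> (h2 t)) \<otimes>\<^bsub>F3\<^esub> (h2 t \<otimes>\<^bsub>F3\<^esub> inv\<^bsub>F3\<^esub> t)"
      using a eng.prems h2t auto_closed[OF a(1) h2t] by (simp add: Aut_mult_apply F3.m_assoc)
    then show ?case using Dn.m_closed[OF eng.IH(1)[OF h2t] eng.IH(2)[OF eng.prems]] by simp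
  qed
qed


declare one_FG[simp del]

lemma group_V3grp: "group V3grp"
  unfolding V3grp_def by (rule P.group_subgroup_generated)

interpretation psiV: group_hom F3 V3grp psi
  using psi_iso by (simp add: group_hom_def group_hom_axioms_def group_F3 group_V3grp iso_def)

lemma derived_V3grp: "derived V3grp (carrier V3grp) = psi ` D"
  unfolding D_def using psiV.derived_img[of "carrier F3"] carrier_V3grp V3_psi by simp

lemma almost_direct:
  "\<forall>g \<in> carrier PSigma3. \<forall>v \<in> V3.
     g \<otimes>\<^bsub>PSigma3\<^esub> v \<otimes>\<^bsub>PSigma3\<^esub> inv\<^bsub>PSigma3\<^esub> g \<otimes>\<^bsub>PSigma3\<^esub> inv\<^bsub>PSigma3\<^esub> v
       \<in> derived V3grp (carrier V3grp)"
proof (intro ballI)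
  fix g v assume g: "g \<in> carrier PSigma3" and v: "v \<in> V3"
  then obtain t where t: "t \<in> carrier F3" and vt: "v = psi t" using V3_psi by auto
  have ga: "g \<in> auto F3" using g by (rule PSigma3_auto)
  have vP: "v \<in> carrier PSigma3" using v V3_sub by auto
  have gt: "g t \<in> carrier F3" using ga t by (rule auto_closed)
  have "g \<otimes>\<^bsub>PSigma3\<^esub> v \<otimes>\<^bsub>PSigma3\<^esub> inv\<^bsub>PSigma3\<^esub> g = psi (g t)"
    using psi_conj[OF ga t] g vt by (simp add: inv_PSigma3)
  moreover have "inv\<^bsub>PSigma3\<^esub> v = psi (inv\<^bsub>F3\<^esub> t)"
    using inv_PSigma3[OF vP] vt t by simp
  ultimately have "g \<otimes>\<^bsub>PSigma3\<^esub> v \<otimes>\<^bsub>PSigma3\<^esub> inv\<^bsub>PSigma3\<^esub> g \<otimes>\<^bsub>PSigma3\<^esub> inv\<^bsub>PSigma3\<^esub> v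
      = psi (g t \<otimes>\<^bsub>F3\<^esub> inv\<^bsub>F3\<^esub> t)"
    using gt t by simp
  moreover have "g t \<otimes>\<^bsub>F3\<^esub> inv\<^bsub>F3\<^esub> t \<in> D" by (rule P_D[OF g t])
  ultimately show "g \<otimes>\<^bsub>PSigma3\<^esub> v \<otimes>\<^bsub>PSigma3\<^esub> inv\<^bsub>PSigma3\<^esub> g \<otimes>\<^bsub>PSigma3\<^esub> inv\<^bsub>PSigma3\<^esub> v
       \<in> derived V3grp (carrier V3grp)"
    using derived_V3grp by simp
qed

theorem mainTheorem8:
  shows "V3grp \<cong> FreeGroup 3
    \<and> (\<exists>\<phi> \<in> iso (FreeGroup 3) OPSigma3.
          \<phi> (gen 1) = V3 #>\<^bsub>PSigma3\<^esub> xi 1 2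
        \<and> \<phi> (gen 2) = V3 #>\<^bsub>PSigma3\<^esub> xi 2 1
        \<and> \<phi> (gen 3) = V3 #>\<^bsub>PSigma3\<^esub> xi 1 3)
    \<and> V3 \<lhd> PSigma3
    \<and> (\<exists>H. subgroup H PSigma3 \<and> H \<inter> V3 = {\<one>\<^bsub>PSigma3\<^esub>}
           \<and> V3 <#>\<^bsub>PSigma3\<^esub> H = carrier PSigma3)
    \<and> (\<forall>g \<in> carrier PSigma3. \<forall>v \<in> V3.
          g \<otimes>\<^bsub>PSigma3\<^esub> v \<otimes>\<^bsub>PSigma3\<^esub> inv\<^bsub>PSigma3\<^esub> g \<otimes>\<^bsub>PSigma3\<^esub> inv\<^bsub>PSigma3\<^esub> v
            \<in> derived V3grp (carrier V3grp))"
proof (intro conjI)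
  show "V3grp \<cong> FreeGroup 3" by (rule V3grp_iso)
  show "\<exists>\<phi> \<in> iso (FreeGroup 3) OPSigma3.
          \<phi> (gen 1) = V3 #>\<^bsub>PSigma3\<^esub> xi 1 2
        \<and> \<phi> (gen 2) = V3 #>\<^bsub>PSigma3\<^esub> xi 2 1
        \<and> \<phi> (gen 3) = V3 #>\<^bsub>PSigma3\<^esub> xi 1 3"
    using phi_iso phi_gen by blast
  show "V3 \<lhd> PSigma3" by (rule V3_normal)
  show "\<exists>H. subgroup H PSigma3 \<and> H \<inter> V3 = {\<one>\<^bsub>PSigma3\<^esub>} \<and> V3 <#>\<^bsub>PSigma3\<^esub> H = carrier PSigma3"
    using H_subgroup H_inter H_prod by blast
  show "\<forall>g \<in> carrier PSigma3. \<forall>v \<in> V3.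
          g \<otimes>\<^bsub>PSigma3\<^esub> v \<otimes>\<^bsub>PSigma3\<^esub> inv\<^bsub>PSigma3\<^esub> g \<otimes>\<^bsub>PSigma3\<^esub> inv\<^bsub>PSigma3\<^esub> v
            \<in> derived V3grp (carrier V3grp)"
    by (rule almost_direct)
qed


end
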